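(* Let $n\ge3$, $\mathcal C,\mathcal P\in\mathbb R^n$ and $\mathcal A\in\Lambda^2\mathbb R^n$, and for $u\in\overline{\mathcal S}(\mathbb R^n)$ put $F(u)=\langle\mathcal C,X(u)\rangle+\langle\mathcal P,Y(u)\rangle+\langle\mathcal A,\omega(u)\rangle$. Suppose one of the following holds: (1) $\mathcal A=0$; (2) $\mathcal A$ is a simple two-form and $\mathcal C=0$; (3) $\mathcal A$ is a simple two-form and $\mathcal P=0$. Then the minimum of $F$ over $\{u:|u|=1\}$ is attained at some $u$ with $N(u)=|X(u)|=|Y(u)|=1$.
   Context: $\overline{\mathcal S}(\mathbb R^n)=\mathcal S\oplus\mathcal S$, where $\mathcal S$ is the complex spinor module of $\mathbb R^n$ with Hermitian inner product $\langle\cdot,\cdot\rangle$ (complex linear in the first slot) on which vectors act skew-Hermitian with $vw+wv=-2\langle v,w\rangle$; $\overline{\mathcal S}$ has direct-sum inner product, and a vector $e_l$ and an extra element $e_0$ act by $e_l(\psi_1,\psi_2)=(e_l\psi_1,-e_l\psi_2)$, $e_0(\psi_1,\psi_2)=(\psi_2,\psi_1)$. For the standard basis $\{e_i\}$ with summation: $N(u)=|u|^2$, $X(u)=\langle e_ie_0u,u\rangle e_i$, $Y(u)=\langle\mathbf ie_iu,u\rangle e_i$, $\omega_{ij}(u)=\operatorname{Im}\langle e_ie_je_0u,u\rangle$. The pairing of two-forms is $\langle\mathcal A,\omega\rangle=\sum_{i<j}\mathcal A_{ij}\omega_{ij}$. A two-form $\mathcal A$ is simple if $\mathcal A=a\,e_1'\wedge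 e_2'$ for some $a\in\mathbb R$ and some orthonormal $e_1',e_2'$. *)

theory Defs
  imports Complex_Main
begin

text \<open>Vectors of C^m are functions nat => complex (only indices < m matter);
  complex m x m matrices are functions nat => nat => complex.
  The basis vector e_{i+1} of R^n is indexed by i < n.\<close>

type_synonym cvec = "nat \<Rightarrow> complex"
type_synonym cmat = "nat \<Rightarrow> nat \<Rightarrow> complex"
type_synonym spinor2 = "cvec \<times> cvec"

definition mact :: "nat \<Rightarrow> cmat \<Rightarrow> cvec \<Rightarrow> cvec" where
  "mact m M \<psi> = (\<lambda>k. \<Sum>l<m. M k l * \<psi> l)"

definition cinner :: "nat \<Rightarrow> cvec \<Rightarrow> cvec \<Rightarrow> complex" where
  "cinner m \<psi> \<phi> = (\<Sum>k<m. \<psi> k * cnj (\<phi> k))"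

definition is_spinor_module :: "nat \<Rightarrow> nat \<Rightarrow> (nat \<Rightarrow> cmat) \<Rightarrow> bool" where
  "is_spinor_module n m E \<longleftrightarrow> m = 2 ^ (n div 2) \<and>
     (\<forall>i<n. \<forall>k<m. \<forall>l<m. E i k l = - cnj (E i l k)) \<and>
     (\<forall>i<n. \<forall>j<n. \<forall>k<m. \<forall>l<m.
        (\<Sum>p<m. E i k p * E j p l + E j k p * E i p l) = (if i = j \<and> k = l then -2 else 0))"

definition dinner :: "nat \<Rightarrow> spinor2 \<Rightarrow> spinor2 \<Rightarrow> complex" where
  "dinner m u v = cinner m (fst u) (fst v) + cinner m (snd u) (snd v)"

text \<open>action of e_l on S + S\<close>
definition dvec :: "nat \<Rightarrow> (nat \<Rightarrow> cmat) \<Rightarrow> nat \<Rightarrow> spinor2 \<Rightarrow> spinor2" where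
  "dvec m E l u = (mact m (E l) (fst u), \<lambda>k. - mact m (E l) (snd u) k)"

text \<open>action of e_0 on S + S\<close>
definition de0 :: "spinor2 \<Rightarrow> spinor2" where
  "de0 u = (snd u, fst u)"

definition dscale :: "complex \<Rightarrow> spinor2 \<Rightarrow> spinor2" where
  "dscale c u = (\<lambda>k. c * fst u k, \<lambda>k. c * snd u k)"

definition Nsp :: "nat \<Rightarrow> spinor2 \<Rightarrow> real" where
  "Nsp m u = Re (dinner m u u)"

definition spnorm :: "nat \<Rightarrow> spinor2 \<Rightarrow> real" where
  "spnorm m u = sqrt (Nsp m u)"

definition Xsp :: "nat \<Rightarrow> (nat \<Rightarrow> cmat) \<Rightarrow> spinor2 \<Rightarrow> nat \<Rightarrow> real" where
  "Xsp m E u = (\<lambda>i. Re (dinner m (dvec m E i (de0 u)) u))"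

definition Ysp :: "nat \<Rightarrow> (nat \<Rightarrow> cmat) \<Rightarrow> spinor2 \<Rightarrow> nat \<Rightarrow> real" where
  "Ysp m E u = (\<lambda>i. Re (dinner m (dscale \<i> (dvec m E i u)) u))"

definition omega :: "nat \<Rightarrow> (nat \<Rightarrow> cmat) \<Rightarrow> spinor2 \<Rightarrow> nat \<Rightarrow> nat \<Rightarrow> real" where
  "omega m E u = (\<lambda>i j. Im (dinner m (dvec m E i (dvec m E j (de0 u))) u))"

definition rinner :: "nat \<Rightarrow> (nat \<Rightarrow> real) \<Rightarrow> (nat \<Rightarrow> real) \<Rightarrow> real" where
  "rinner n x y = (\<Sum>i<n. x i * y i)"

definition rnorm :: "nat \<Rightarrow> (nat \<Rightarrow> real) \<Rightarrow> real" where
  "rnorm n x = sqrt (rinner n x x)"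

definition is_two_form :: "nat \<Rightarrow> (nat \<Rightarrow> nat \<Rightarrow> real) \<Rightarrow> bool" where
  "is_two_form n A \<longleftrightarrow> (\<forall>i<n. \<forall>j<n. A i j = - A j i)"

definition pair2 :: "nat \<Rightarrow> (nat \<Rightarrow> nat \<Rightarrow> real) \<Rightarrow> (nat \<Rightarrow> nat \<Rightarrow> real) \<Rightarrow> real" where
  "pair2 n A w = (\<Sum>i<n. \<Sum>j\<in>{i<..<n}. A i j * w i j)"

definition simple_two_form :: "nat \<Rightarrow> (nat \<Rightarrow> nat \<Rightarrow> real) \<Rightarrow> bool" where
  "simple_two_form n A \<longleftrightarrow> (\<exists>a e1 e2. rinner n e1 e1 = 1 \<and> rinner n e2 e2 = 1 \<and> rinner n e1 e2 = 0 \<and>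
      (\<forall>i<n. \<forall>j<n. A i j = a * (e1 i * e2 j - e1 j * e2 i)))"

definition Ffun :: "nat \<Rightarrow> nat \<Rightarrow> (nat \<Rightarrow> cmat) \<Rightarrow> (nat \<Rightarrow> real) \<Rightarrow> (nat \<Rightarrow> real)
     \<Rightarrow> (nat \<Rightarrow> nat \<Rightarrow> real) \<Rightarrow> spinor2 \<Rightarrow> real" where
  "Ffun n m E C P A u = rinner n C (Xsp m E u) + rinner n P (Ysp m E u) + pair2 n A (omega m E u)"

end

theory Submission
  imports Defs "HOL-Library.Function_Algebras" "HOL-Library.Product_Plus"
begin


definition trn :: "nat \<Rightarrow> cvec \<Rightarrow> cvec" where
  "trn m f = (\<lambda>k. if k < m then f k else 0)"

definition Tsp :: "nat \<Rightarrow> spinor2 \<Rightarrow> spinor2" where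
  "Tsp m u = (trn m (fst u), trn m (snd u))"

definition Vm :: "nat \<Rightarrow> spinor2 set" where
  "Vm m = {u. \<forall>k. m \<le> k \<longrightarrow> fst u k = 0 \<and> snd u k = 0}"

definition mmul :: "nat \<Rightarrow> cmat \<Rightarrow> cmat \<Rightarrow> cmat" where
  "mmul m M N = (\<lambda>k l. \<Sum>p<m. M k p * N p l)"

text \<open>odd (vector-type) action and even action of a matrix on S + S\<close>
definition mop :: "nat \<Rightarrow> cmat \<Rightarrow> spinor2 \<Rightarrow> spinor2" where
  "mop m M u = (trn m (mact m M (fst u)), trn m (\<lambda>k. - mact m M (snd u) k))"

definition eop :: "nat \<Rightarrow> cmat \<Rightarrow> spinor2 \<Rightarrow> spinor2" where
  "eop m M u = (trn m (mact m M (fst u)), trn m (mact m M (snd u)))"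

definition Mx :: "nat \<Rightarrow> (nat \<Rightarrow> cmat) \<Rightarrow> (nat \<Rightarrow> real) \<Rightarrow> cmat" where
  "Mx n E x = (\<lambda>k l. \<Sum>i<n. complex_of_real (x i) * E i k l)"

lemma dinner_add1: "dinner m (u + v) w = dinner m u w + dinner m v w"
  by (simp add: dinner_def cinner_def sum.distrib distrib_right)
lemma dinner_add2: "dinner m w (u + v) = dinner m w u + dinner m w v"
  by (simp add: dinner_def cinner_def sum.distrib distrib_left)
lemma dinner_diff1: "dinner m (u - v) w = dinner m u w - dinner m v w"
  by (simp add: dinner_def cinner_def sum_subtractf left_diff_distrib)
lemma dinner_diff2: "dinner m w (u - v) = dinner m w u - dinner m w v"
  by (simp add: dinner_def cinner_def sum_subtractf right_diff_distrib)
lemma dinner_uminus1: "dinner m (- u) w = - dinner m u w"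
  by (simp add: dinner_def cinner_def sum_negf)
lemma dinner_uminus2: "dinner m w (- u) = - dinner m w u"
  by (simp add: dinner_def cinner_def sum_negf)
lemma dinner_scale1: "dinner m (dscale c u) w = c * dinner m u w"
  by (simp add: dinner_def cinner_def dscale_def sum_distrib_left distrib_left mult.assoc)
lemma dinner_scale2: "dinner m w (dscale c u) = cnj c * dinner m w u"
  by (simp add: dinner_def cinner_def dscale_def sum_distrib_left distrib_left mult_ac)
lemma dinner_cnj: "dinner m w u = cnj (dinner m u w)"
  by (simp add: dinner_def cinner_def mult.commute)
lemma dinner_zero1: "dinner m 0 w = 0"
  by (simp add: dinner_def cinner_def)
lemma dinner_zero2: "dinner m w 0 = 0"
  by (simp add: dinner_def cinner_def)
lemma dinner_sum1: "dinner m (\<Sum>i\<in>I. f i) w = (\<Sum>i\<in>I. dinner m (f i) w)"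
  by (induction I rule: infinite_finite_induct) (auto simp: dinner_zero1 dinner_add1)

lemma dinner_self_real: "Im (dinner m u u) = 0"
  by (simp add: dinner_def cinner_def)

lemma dinner_self_Re: "Re (dinner m u u) = (\<Sum>k<m. (cmod (fst u k))^2) + (\<Sum>k<m. (cmod (snd u k))^2)"
  by (simp add: dinner_def cinner_def flip: complex_norm_square)

lemma dinner_self_nonneg: "0 \<le> Re (dinner m u u)"
  unfolding dinner_self_Re by (intro add_nonneg_nonneg sum_nonneg) auto

lemma dinner_self_eq: "dinner m u u = complex_of_real (Re (dinner m u u))"
  using dinner_self_real by (simp add: complex_eq_iff)

lemma trn_apply: "trn m f k = (if k < m then f k else 0)" by (simp add: trn_def)

lemma mact_trn: "mact m M (trn m f) = mact m M f"
  by (simp add: mact_def trn_def)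

lemma dinner_Tsp1: "dinner m (Tsp m u) w = dinner m u w"
  by (simp add: dinner_def cinner_def Tsp_def trn_def)
lemma dinner_Tsp2: "dinner m w (Tsp m u) = dinner m w u"
  by (simp add: dinner_def cinner_def Tsp_def trn_def)

lemma Tsp_Vm: "u \<in> Vm m \<Longrightarrow> Tsp m u = u"
  by (cases u) (auto simp: Tsp_def Vm_def trn_def fun_eq_iff)
lemma Tsp_in_Vm: "Tsp m u \<in> Vm m"
  by (simp add: Tsp_def Vm_def trn_def)

lemma mop_Vm: "mop m M u \<in> Vm m" by (simp add: mop_def Vm_def trn_def)
lemma eop_Vm: "eop m M u \<in> Vm m" by (simp add: eop_def Vm_def trn_def)
lemma de0_Vm: "u \<in> Vm m \<Longrightarrow> de0 u \<in> Vm m" by (simp add: de0_def Vm_def)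
lemma dscale_Vm: "u \<in> Vm m \<Longrightarrow> dscale c u \<in> Vm m" by (simp add: dscale_def Vm_def)
lemma add_Vm: "u \<in> Vm m \<Longrightarrow> w \<in> Vm m \<Longrightarrow> u + w \<in> Vm m" by (simp add: Vm_def)
lemma diff_Vm: "u \<in> Vm m \<Longrightarrow> w \<in> Vm m \<Longrightarrow> u - w \<in> Vm m" by (simp add: Vm_def)
lemma uminus_Vm: "u \<in> Vm m \<Longrightarrow> - u \<in> Vm m" by (simp add: Vm_def)
lemma zero_Vm: "0 \<in> Vm m" by (simp add: Vm_def)

lemma dscale_one[simp]: "dscale 1 u = u" by (simp add: dscale_def)
lemma dscale_zero[simp]: "dscale 0 u = 0" by (simp add: dscale_def zero_prod_def zero_fun_def)
lemma dscale_dscale[simp]: "dscale c (dscale d u) = dscale (c * d) u"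
  by (simp add: dscale_def mult.assoc)
lemma dscale_add: "dscale c (u + w) = dscale c u + dscale c w"
  by (simp add: dscale_def fun_eq_iff distrib_left)
lemma dscale_diff: "dscale c (u - w) = dscale c u - dscale c w"
  by (simp add: dscale_def fun_eq_iff right_diff_distrib)
lemma dscale_uminus: "dscale c (- u) = - dscale c u"
  by (simp add: dscale_def fun_eq_iff)
lemma dscale_add_left: "dscale (c + d) u = dscale c u + dscale d u"
  by (simp add: dscale_def fun_eq_iff distrib_right)
lemma dscale_minus_left: "dscale (- c) u = - dscale c u"
  by (simp add: dscale_def fun_eq_iff prod_eq_iff)
lemma dscale_minus_one: "dscale (-1) u = - u"
  by (simp add: dscale_def fun_eq_iff prod_eq_iff)

lemma mop_add: "mop m M (u + w) = mop m M u + mop m M w"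
  by (simp add: mop_def mact_def trn_def fun_eq_iff distrib_left sum.distrib)
lemma mop_diff: "mop m M (u - w) = mop m M u - mop m M w"
  by (simp add: mop_def mact_def trn_def fun_eq_iff right_diff_distrib sum_subtractf)
lemma mop_uminus: "mop m M (- u) = - mop m M u"
  by (simp add: mop_def mact_def trn_def fun_eq_iff sum_negf)
lemma mop_scale: "mop m M (dscale c u) = dscale c (mop m M u)"
  by (simp add: mop_def mact_def trn_def fun_eq_iff dscale_def sum_distrib_left mult_ac)
lemma mop_zero: "mop m M 0 = 0"
  by (simp add: mop_def mact_def trn_def fun_eq_iff prod_eq_iff)

lemma de0_add: "de0 (u + w) = de0 u + de0 w" by (simp add: de0_def)
lemma de0_diff: "de0 (u - w) = de0 u - de0 w" by (simp add: de0_def)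
lemma de0_uminus: "de0 (- u) = - de0 u" by (simp add: de0_def)
lemma de0_scale: "de0 (dscale c u) = dscale c (de0 u)" by (simp add: de0_def dscale_def)
lemma de0_de0[simp]: "de0 (de0 u) = u" by (simp add: de0_def)
lemma dinner_de0: "dinner m (de0 u) w = dinner m u (de0 w)"
  by (simp add: dinner_def de0_def)
lemma dinner_de0_self: "dinner m (de0 u) (de0 u) = dinner m u u"
  by (simp add: dinner_def de0_def)

lemma mop_de0: "mop m M (de0 u) = - de0 (mop m M u)"
  by (simp add: mop_def de0_def trn_def fun_eq_iff)

lemma mop_mop: "mop m M (mop m N u) = eop m (mmul m M N) u"
proof -
  have *: "mact m M (trn m (mact m N f)) = mact m (mmul m M N) f" for f
  proof
    fix k
    have "mact m M (trn m (mact m N f)) k = (\<Sum>l<m. \<Sum>p<m. M k l * (N l p * f p))"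
      by (simp add: mact_def trn_def sum_distrib_left)
    also have "\<dots> = (\<Sum>p<m. \<Sum>l<m. M k l * (N l p * f p))" by (rule sum.swap)
    also have "\<dots> = mact m (mmul m M N) f k"
      by (simp add: mact_def mmul_def sum_distrib_right mult.assoc)
    finally show "mact m M (trn m (mact m N f)) k = mact m (mmul m M N) f k" .
  qed
  have **: "mact m M (trn m (\<lambda>k. - mact m N f k)) = (\<lambda>k. - mact m (mmul m M N) f k)" for f
  proof -
    have "trn m (\<lambda>k. - mact m N f k) = - trn m (mact m N f)" by (simp add: trn_def fun_eq_iff)
    moreover have "mact m M (- g) = - mact m M g" for g by (simp add: mact_def fun_eq_iff sum_negf)
    ultimately have "mact m M (trn m (\<lambda>k. - mact m N f k)) = - mact m (mmul m M N) f"
      using * by simp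
    then show ?thesis by (simp add: fun_eq_iff)
  qed
  show ?thesis by (simp add: mop_def eop_def * **)
qed

lemma eop_add_mat: "eop m M u + eop m N u = eop m (\<lambda>k l. M k l + N k l) u"
  by (simp add: eop_def mact_def trn_def fun_eq_iff distrib_right sum.distrib)

lemma eop_scalar:
  assumes "\<forall>k<m. \<forall>l<m. M k l = (if k = l then c else 0)"
  shows "eop m M u = dscale c (Tsp m u)"
proof -
  have "mact m M f k = c * f k" if "k < m" for f k
  proof -
    have "mact m M f k = (\<Sum>l<m. (if k = l then c else 0) * f l)"
      unfolding mact_def using assms that by (intro sum.cong) auto
    also have "\<dots> = (\<Sum>l<m. if k = l then c * f l else 0)" by (intro sum.cong) auto
    also have "\<dots> = c * f k" using that by (simp add: sum.delta)
    finally show ?thesis .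
  qed
  then show ?thesis by (simp add: eop_def dscale_def Tsp_def trn_def fun_eq_iff)
qed

lemma dinner_mop_skew:
  assumes "\<forall>k<m. \<forall>l<m. M k l = - cnj (M l k)"
  shows "dinner m (mop m M u) w = - dinner m u (mop m M w)"
proof -
  have 1: "cinner m (mact m M f) g = - cinner m f (mact m M g)" for f g
  proof -
    have "cinner m (mact m M f) g = (\<Sum>k<m. \<Sum>l<m. M k l * f l * cnj (g k))"
      by (simp add: cinner_def mact_def sum_distrib_right)
    also have "\<dots> = (\<Sum>l<m. \<Sum>k<m. M k l * f l * cnj (g k))" by (rule sum.swap)
    also have "\<dots> = (\<Sum>l<m. \<Sum>k<m. - (f l * (cnj (M l k) * cnj (g k))))"
    proof (intro sum.cong refl)
      fix l k assume "l \<in> {..<m}" "k \<in> {..<m}"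
      then have "M k l = - cnj (M l k)" using assms by blast
      then show "M k l * f l * cnj (g k) = - (f l * (cnj (M l k) * cnj (g k)))" by simp
    qed
    also have "\<dots> = - (\<Sum>l<m. \<Sum>k<m. f l * (cnj (M l k) * cnj (g k)))"
      by (simp add: sum_negf)
    also have "\<dots> = - cinner m f (mact m M g)"
      by (simp add: cinner_def mact_def sum_distrib_left)
    finally show ?thesis .
  qed
  have 2: "cinner m (trn m f) g = cinner m f g" "cinner m g (trn m f) = cinner m g f" for f g
    by (simp_all add: cinner_def trn_def)
  have 3: "cinner m (\<lambda>k. - f k) g = - cinner m f g" "cinner m g (\<lambda>k. - f k) = - cinner m g f" for f g
    by (simp_all add: cinner_def sum_negf)
  show ?thesis by (simp add: dinner_def mop_def 1 2 3)
qed




lemma triple_sum: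
  "(\<Sum>p\<in>P. (\<Sum>i\<in>I. a i * F i p) * (\<Sum>j\<in>J. b j * G j p)) =
   (\<Sum>i\<in>I. \<Sum>j\<in>J. a i * b j * (\<Sum>p\<in>P. F i p * G j p))" for a b :: "nat \<Rightarrow> complex"
proof -
  have "(\<Sum>p\<in>P. (\<Sum>i\<in>I. a i * F i p) * (\<Sum>j\<in>J. b j * G j p)) =
        (\<Sum>p\<in>P. \<Sum>i\<in>I. \<Sum>j\<in>J. a i * b j * (F i p * G j p))"
    by (simp add: sum_product mult_ac)
  also have "\<dots> = (\<Sum>i\<in>I. \<Sum>p\<in>P. \<Sum>j\<in>J. a i * b j * (F i p * G j p))"
    by (rule sum.swap)
  also have "\<dots> = (\<Sum>i\<in>I. \<Sum>j\<in>J. \<Sum>p\<in>P. a i * b j * (F i p * G j p))"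
    by (intro sum.cong refl sum.swap)
  also have "\<dots> = (\<Sum>i\<in>I. \<Sum>j\<in>J. a i * b j * (\<Sum>p\<in>P. F i p * G j p))"
    by (simp add: sum_distrib_left)
  finally show ?thesis .
qed

locale spin =
  fixes n m :: nat and E :: "nat \<Rightarrow> cmat"
  assumes sm: "is_spinor_module n m E"
begin

lemma m_eq: "m = 2 ^ (n div 2)" using sm by (simp add: is_spinor_module_def)
lemma m_pos: "0 < m" using m_eq by simp
lemma skewE: "i < n \<Longrightarrow> k < m \<Longrightarrow> l < m \<Longrightarrow> E i k l = - cnj (E i l k)"
  using sm unfolding is_spinor_module_def by blast
lemma cliffE: "i < n \<Longrightarrow> j < n \<Longrightarrow> k < m \<Longrightarrow> l < m \<Longrightarrow>
   (\<Sum>p<m. E i k p * E j p l + E j k p * E i p l) = (if i = j \<and> k = l then -2 else 0)"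
  using sm unfolding is_spinor_module_def by blast

definition vop :: "(nat \<Rightarrow> real) \<Rightarrow> spinor2 \<Rightarrow> spinor2" where
  "vop x = mop m (Mx n E x)"

lemma Mx_skew: "\<forall>k<m. \<forall>l<m. Mx n E x k l = - cnj (Mx n E x l k)"
proof (intro allI impI)
  fix k l assume kl: "k < m" "l < m"
  have "Mx n E x k l = (\<Sum>i<n. - (complex_of_real (x i) * cnj (E i l k)))"
    unfolding Mx_def
  proof (intro sum.cong refl)
    fix i assume "i \<in> {..<n}"
    then have "E i k l = - cnj (E i l k)" using kl skewE by blast
    then show "complex_of_real (x i) * E i k l = - (complex_of_real (x i) * cnj (E i l k))" by simp
  qed
  also have "\<dots> = - cnj (Mx n E x l k)" by (simp add: Mx_def sum_negf)
  finally show "Mx n E x k l = - cnj (Mx n E x l k)" .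
qed

lemma dinner_vop: "dinner m (vop x u) w = - dinner m u (vop x w)"
  unfolding vop_def by (rule dinner_mop_skew[OF Mx_skew])

lemma Mx_cliff:
  assumes "k < m" "l < m"
  shows "mmul m (Mx n E x) (Mx n E y) k l + mmul m (Mx n E y) (Mx n E x) k l =
     (if k = l then - 2 * complex_of_real (rinner n x y) else 0)"
proof -
  have "mmul m (Mx n E x) (Mx n E y) k l + mmul m (Mx n E y) (Mx n E x) k l =
    (\<Sum>i<n. \<Sum>j<n. complex_of_real (x i) * complex_of_real (y j) * (\<Sum>p<m. E i k p * E j p l))
    + (\<Sum>j<n. \<Sum>i<n. complex_of_real (y j) * complex_of_real (x i) * (\<Sum>p<m. E j k p * E i p l))"
    unfolding mmul_def Mx_def by (simp only: triple_sum)
  also have "(\<Sum>j<n. \<Sum>i<n. complex_of_real (y j) * complex_of_real (x i) * (\<Sum>p<m. E j k p * E i p l))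
      = (\<Sum>i<n. \<Sum>j<n. complex_of_real (x i) * complex_of_real (y j) * (\<Sum>p<m. E j k p * E i p l))"
    by (subst sum.swap) (simp add: mult_ac)
  also have "(\<Sum>i<n. \<Sum>j<n. complex_of_real (x i) * complex_of_real (y j) * (\<Sum>p<m. E i k p * E j p l))
     + (\<Sum>i<n. \<Sum>j<n. complex_of_real (x i) * complex_of_real (y j) * (\<Sum>p<m. E j k p * E i p l))
     = (\<Sum>i<n. \<Sum>j<n. complex_of_real (x i) * complex_of_real (y j) *
          (\<Sum>p<m. E i k p * E j p l + E j k p * E i p l))"
    by (simp add: sum.distrib distrib_left)
  also have "\<dots> = (\<Sum>i<n. \<Sum>j<n. complex_of_real (x i) * complex_of_real (y j) *
          (if i = j \<and> k = l then -2 else 0))"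
    using assms cliffE by (intro sum.cong refl) simp
  also have "\<dots> = (\<Sum>i<n. if k = l then complex_of_real (x i) * complex_of_real (y i) * (-2) else 0)"
    by (intro sum.cong refl) (auto simp: if_distrib sum.delta cong: if_cong)
  also have "\<dots> = (if k = l then - 2 * complex_of_real (rinner n x y) else 0)"
    by (auto simp: rinner_def sum_distrib_left mult_ac)
  finally show ?thesis .
qed

lemma vop_cliff: "vop x (vop y u) + vop y (vop x u) = dscale (- 2 * complex_of_real (rinner n x y)) (Tsp m u)"
  unfolding vop_def mop_mop eop_add_mat
  by (rule eop_scalar) (simp add: Mx_cliff)

lemma vop_cliffV: "u \<in> Vm m \<Longrightarrow> vop x (vop y u) = - vop y (vop x u) - dscale (2 * complex_of_real (rinner n x y)) u"
  using vop_cliff[of x y u] Tsp_Vm[of u m]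
  by (simp add: eq_diff_eq eq_neg_iff_add_eq_0 dscale_minus_left algebra_simps)

end



lemma mop_mat_lin: "mop m (\<lambda>k l. c * M k l + N k l) w = dscale c (mop m M w) + mop m N w"
  by (simp add: mop_def mact_def trn_def dscale_def fun_eq_iff distrib_left distrib_right sum.distrib
      sum_distrib_left mult.assoc)
lemma mop_mat_zero: "mop m (\<lambda>k l. 0) w = 0"
  by (simp add: mop_def mact_def trn_def fun_eq_iff prod_eq_iff)
lemma eop_mat_lin: "eop m (\<lambda>k l. c * M k l + N k l) w = dscale c (eop m M w) + eop m N w"
  by (simp add: eop_def mact_def trn_def dscale_def fun_eq_iff distrib_left distrib_right sum.distrib
      sum_distrib_left mult.assoc)
lemma eop_mat_zero: "eop m (\<lambda>k l. 0) w = 0"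
  by (simp add: eop_def mact_def trn_def fun_eq_iff prod_eq_iff)

lemma dinner_mop_sum:
  assumes "finite I"
  shows "dinner m (mop m (\<lambda>k l. \<Sum>i\<in>I. c i * M i k l) w) u = (\<Sum>i\<in>I. c i * dinner m (mop m (M i) w) u)"
  using assms
proof (induction I rule: finite_induct)
  case empty then show ?case by (simp add: mop_mat_zero dinner_zero1)
next
  case (insert x F)
  have "mop m (\<lambda>k l. \<Sum>i\<in>insert x F. c i * M i k l) w =
        mop m (\<lambda>k l. c x * M x k l + (\<Sum>i\<in>F. c i * M i k l)) w"
    using insert by simp
  also have "\<dots> = dscale (c x) (mop m (M x) w) + mop m (\<lambda>k l. \<Sum>i\<in>F. c i * M i k l) w"
    by (rule mop_mat_lin)
  finally show ?case using insert by (simp add: dinner_add1 dinner_scale1)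
qed

lemma dinner_eop_sum:
  assumes "finite I"
  shows "dinner m (eop m (\<lambda>k l. \<Sum>i\<in>I. c i * M i k l) w) u = (\<Sum>i\<in>I. c i * dinner m (eop m (M i) w) u)"
  using assms
proof (induction I rule: finite_induct)
  case empty then show ?case by (simp add: eop_mat_zero dinner_zero1)
next
  case (insert x F)
  have "eop m (\<lambda>k l. \<Sum>i\<in>insert x F. c i * M i k l) w =
        eop m (\<lambda>k l. c x * M x k l + (\<Sum>i\<in>F. c i * M i k l)) w"
    using insert by simp
  also have "\<dots> = dscale (c x) (eop m (M x) w) + eop m (\<lambda>k l. \<Sum>i\<in>F. c i * M i k l) w"
    by (rule eop_mat_lin)
  finally show ?case using insert by (simp add: dinner_add1 dinner_scale1)
qed

lemma dinner_dvec_mop: "dinner m (dvec m E i w) u = dinner m (mop m (E i) w) u"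
  by (simp add: dinner_def cinner_def dvec_def mop_def trn_def)

lemma mop_dvec: "mop m M (dvec m E j w) = mop m M (mop m (E j) w)"
proof -
  have "trn m (\<lambda>k. - mact m (E j) (snd w) k) = trn m (\<lambda>k. - mact m (E j) (snd w) k)" ..
  show ?thesis
    by (simp add: mop_def dvec_def mact_def trn_def)
qed

lemma dvec_Tsp: "dvec m E i (Tsp m v) = dvec m E i v"
  by (simp add: dvec_def Tsp_def mact_trn)
lemma de0_Tsp: "de0 (Tsp m v) = Tsp m (de0 v)"
  by (simp add: de0_def Tsp_def)

context spin
begin

lemma vop_lin: "vop (\<lambda>i. a * x i + b * y i) u = dscale (complex_of_real a) (vop x u) + dscale (complex_of_real b) (vop y u)"
proof -
  have "Mx n E (\<lambda>i. a * x i + b * y i) = (\<lambda>k l. complex_of_real a * Mx n E x k l + (complex_of_real b * Mx n E y k l))"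
    by (simp add: Mx_def fun_eq_iff sum.distrib sum_distrib_left distrib_right mult.assoc)
  then show ?thesis unfolding vop_def
    using mop_mat_lin[of m "complex_of_real a" "Mx n E x" "\<lambda>k l. complex_of_real b * Mx n E y k l" u]
      mop_mat_lin[of m "complex_of_real b" "Mx n E y" "\<lambda>k l. 0" u]
    by (simp add: mop_mat_zero)
qed

lemma vop_cong: "(\<And>i. i < n \<Longrightarrow> x i = y i) \<Longrightarrow> vop x u = vop y u"
  unfolding vop_def Mx_def by (intro arg_cong2[where f="mop m"] refl) (auto intro!: sum.cong ext)

lemma vop_Vm: "vop x u \<in> Vm m" unfolding vop_def by (rule mop_Vm)

lemma dinner_vop_expand: "dinner m (vop x w) u = (\<Sum>i<n. complex_of_real (x i) * dinner m (dvec m E i w) u)"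
  unfolding vop_def Mx_def dinner_dvec_mop by (rule dinner_mop_sum) simp

lemma dinner_vop_vop_expand:
  "dinner m (vop x (vop y w)) u = (\<Sum>i<n. \<Sum>j<n. complex_of_real (x i) * complex_of_real (y j) *
      dinner m (dvec m E i (dvec m E j w)) u)"
proof -
  have "mmul m (Mx n E x) (Mx n E y) = (\<lambda>k l. \<Sum>i<n. complex_of_real (x i) *
           (\<Sum>j<n. complex_of_real (y j) * mmul m (E i) (E j) k l))"
    unfolding mmul_def Mx_def
    by (simp only: triple_sum) (simp add: fun_eq_iff sum_distrib_left mult_ac)
  then have "dinner m (vop x (vop y w)) u = (\<Sum>i<n. complex_of_real (x i) *
      dinner m (eop m (\<lambda>k l. \<Sum>j<n. complex_of_real (y j) * mmul m (E i) (E j) k l) w) u)"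
    unfolding vop_def mop_mop by (simp add: dinner_eop_sum)
  also have "\<dots> = (\<Sum>i<n. complex_of_real (x i) * (\<Sum>j<n. complex_of_real (y j) *
      dinner m (eop m (mmul m (E i) (E j)) w) u))"
    by (simp add: dinner_eop_sum)
  also have "\<dots> = (\<Sum>i<n. \<Sum>j<n. complex_of_real (x i) * complex_of_real (y j) *
      dinner m (dvec m E i (dvec m E j w)) u)"
    by (simp add: dinner_dvec_mop mop_dvec mop_mop sum_distrib_left mult_ac)
  finally show ?thesis .
qed

lemma X_link: "rinner n x (Xsp m E u) = Re (dinner m (vop x (de0 u)) u)"
  by (simp add: rinner_def Xsp_def dinner_vop_expand Re_sum)

lemma Y_link: "rinner n y (Ysp m E u) = Re (dinner m (dscale \<i> (vop y u)) u)"
  by (simp add: rinner_def Ysp_def dinner_vop_expand dinner_scale1 Re_sum sum_distrib_left mult_ac)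

end



lemma half_sum:
  fixes B :: "nat \<Rightarrow> nat \<Rightarrow> real"
  assumes sym: "\<And>i j. i < N \<Longrightarrow> j < N \<Longrightarrow> B i j = B j i" and diag: "\<And>i. i < N \<Longrightarrow> B i i = 0"
  shows "2 * (\<Sum>i<N. \<Sum>j\<in>{i<..<N}. B i j) = (\<Sum>i<N. \<Sum>j<N. B i j)"
proof -
  have "\<forall>k. k \<le> N \<longrightarrow> 2 * (\<Sum>i<k. \<Sum>j\<in>{i<..<k}. B i j) = (\<Sum>i<k. \<Sum>j<k. B i j)"
  proof (intro allI)
    fix k show "k \<le> N \<longrightarrow> 2 * (\<Sum>i<k. \<Sum>j\<in>{i<..<k}. B i j) = (\<Sum>i<k. \<Sum>j<k. B i j)"
    proof (induction k)
      case 0 then show ?case by simp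
    next
      case (Suc k)
      show ?case
      proof
        assume k: "Suc k \<le> N"
        have IH: "2 * (\<Sum>i<k. \<Sum>j\<in>{i<..<k}. B i j) = (\<Sum>i<k. \<Sum>j<k. B i j)" using Suc k by simp
        have e1: "(\<Sum>i<Suc k. \<Sum>j\<in>{i<..<Suc k}. B i j) = (\<Sum>i<k. \<Sum>j\<in>{i<..<k}. B i j) + (\<Sum>i<k. B i k)"
        proof -
          have "{k<..<Suc k} = {}" by auto
          then have "(\<Sum>i<Suc k. \<Sum>j\<in>{i<..<Suc k}. B i j) = (\<Sum>i<k. \<Sum>j\<in>{i<..<Suc k}. B i j)"
            by simp
          also have "\<dots> = (\<Sum>i<k. (\<Sum>j\<in>{i<..<k}. B i j) + B i k)"
          proof (intro sum.cong refl)
            fix i assume "i \<in> {..<k}"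
            then have "{i<..<Suc k} = insert k {i<..<k}" by auto
            then show "(\<Sum>j\<in>{i<..<Suc k}. B i j) = (\<Sum>j\<in>{i<..<k}. B i j) + B i k" by simp
          qed
          finally show ?thesis by (simp add: sum.distrib)
        qed
        have e2: "(\<Sum>i<Suc k. \<Sum>j<Suc k. B i j) = (\<Sum>i<k. \<Sum>j<k. B i j) + 2 * (\<Sum>i<k. B i k)"
        proof -
          have "(\<Sum>i<Suc k. \<Sum>j<Suc k. B i j) = (\<Sum>i<k. \<Sum>j<k. B i j) + (\<Sum>i<k. B i k) + (\<Sum>j<k. B k j) + B k k"
            by (simp add: sum.distrib)
          moreover have "(\<Sum>j<k. B k j) = (\<Sum>i<k. B i k)" using sym k by (intro sum.cong) auto
          moreover have "B k k = 0" using diag k by simp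
          ultimately show ?thesis by simp
        qed
        show "2 * (\<Sum>i<Suc k. \<Sum>j\<in>{i<..<Suc k}. B i j) = (\<Sum>i<Suc k. \<Sum>j<Suc k. B i j)"
          using e1 e2 IH by simp
      qed
    qed
  qed
  then show ?thesis by simp
qed

context spin
begin

lemma dvec_anti:
  assumes "i < n" "j < n" "i \<noteq> j"
  shows "dinner m (dvec m E i (dvec m E j w)) u = - dinner m (dvec m E j (dvec m E i w)) u"
proof -
  have "eop m (mmul m (E i) (E j)) w + eop m (mmul m (E j) (E i)) w = eop m (\<lambda>k l. mmul m (E i) (E j) k l + mmul m (E j) (E i) k l) w"
    by (rule eop_add_mat)
  also have "\<dots> = dscale 0 (Tsp m w)"
    by (rule eop_scalar) (use assms cliffE in \<open>simp add: mmul_def sum.distrib\<close>)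
  finally have "eop m (mmul m (E i) (E j)) w + eop m (mmul m (E j) (E i)) w = 0" by simp
  then have "dinner m (eop m (mmul m (E i) (E j)) w) u + dinner m (eop m (mmul m (E j) (E i)) w) u = 0"
    by (metis dinner_add1 dinner_zero1)
  then show ?thesis
    by (simp add: dinner_dvec_mop mop_dvec mop_mop eq_neg_iff_add_eq_0)
qed

lemma pair2_link:
  assumes Ae: "\<forall>i<n. \<forall>j<n. A i j = a * (e1 i * e2 j - e1 j * e2 i)" and orth: "rinner n e1 e2 = 0"
  shows "pair2 n A (omega m E u) = a * Im (dinner m (vop e1 (vop e2 (de0 u))) u)"
proof -
  define W where "W i j = dinner m (dvec m E i (dvec m E j (de0 u))) u" for i j
  define B where "B i j = A i j * Im (W i j)" for i j
  have om: "omega m E u i j = Im (W i j)" for i j by (simp add: omega_def W_def)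
  have symB: "B i j = B j i" if "i < n" "j < n" for i j
  proof (cases "i = j")
    case False
    then have "W i j = - W j i" unfolding W_def using that by (intro dvec_anti)
    moreover have "A i j = - A j i"
    proof -
      have "A i j = a * (e1 i * e2 j - e1 j * e2 i)" "A j i = a * (e1 j * e2 i - e1 i * e2 j)"
        using Ae that by blast+
      then show ?thesis by (simp add: algebra_simps)
    qed
    ultimately show ?thesis by (simp add: B_def)
  qed simp
  have diagB: "B i i = 0" if "i < n" for i using Ae that by (simp add: B_def)
  have "2 * pair2 n A (omega m E u) = (\<Sum>i<n. \<Sum>j<n. B i j)"
    unfolding pair2_def om B_def[symmetric] by (rule half_sum[OF symB diagB])
  also have "\<dots> = (\<Sum>i<n. \<Sum>j<n. a * (e1 i * e2 j * Im (W i j)) - a * (e2 i * e1 j * Im (W i j)))"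
    unfolding B_def
  proof (intro sum.cong refl)
    fix i j assume "i \<in> {..<n}" "j \<in> {..<n}"
    then have h: "A i j = a * (e1 i * e2 j - e1 j * e2 i)" using Ae by blast
    show "A i j * Im (W i j) = a * (e1 i * e2 j * Im (W i j)) - a * (e2 i * e1 j * Im (W i j))"
      unfolding h by (simp add: algebra_simps)
  qed
  also have "\<dots> = a * (\<Sum>i<n. \<Sum>j<n. e1 i * e2 j * Im (W i j)) - a * (\<Sum>i<n. \<Sum>j<n. e2 i * e1 j * Im (W i j))"
    by (simp add: sum_subtractf sum_distrib_left)
  also have "(\<Sum>i<n. \<Sum>j<n. e1 i * e2 j * Im (W i j)) = Im (dinner m (vop e1 (vop e2 (de0 u))) u)"
    by (simp add: dinner_vop_vop_expand W_def Im_sum)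
  also have "(\<Sum>i<n. \<Sum>j<n. e2 i * e1 j * Im (W i j)) = Im (dinner m (vop e2 (vop e1 (de0 u))) u)"
    by (simp add: dinner_vop_vop_expand W_def Im_sum)
  also have "dinner m (vop e2 (vop e1 (de0 u))) u = - dinner m (vop e1 (vop e2 (de0 u))) u"
  proof -
    have "vop e1 (vop e2 (de0 u)) + vop e2 (vop e1 (de0 u)) = 0"
      using vop_cliff[of e1 e2 "de0 u"] orth by simp
    then have "dinner m (vop e1 (vop e2 (de0 u))) u + dinner m (vop e2 (vop e1 (de0 u))) u = 0"
      by (metis dinner_add1 dinner_zero1)
    then show ?thesis by (simp add: eq_neg_iff_add_eq_0 add.commute)
  qed
  finally show ?thesis by simp
qed

lemma Ffun_Tsp: "Ffun n m E C P A (Tsp m v) = Ffun n m E C P A v"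
proof -
  have "Xsp m E (Tsp m v) = Xsp m E v"
    by (simp add: Xsp_def de0_Tsp dvec_Tsp dinner_Tsp2)
  moreover have "Ysp m E (Tsp m v) = Ysp m E v"
    by (simp add: Ysp_def dvec_Tsp dinner_Tsp2)
  moreover have "dvec m E i (Tsp m w) = dvec m E i w" for i w by (rule dvec_Tsp)
  then have "omega m E (Tsp m v) = omega m E v"
    by (simp add: omega_def de0_Tsp dinner_Tsp2)
  ultimately show ?thesis by (simp add: Ffun_def)
qed

lemma Nsp_Tsp: "Nsp m (Tsp m v) = Nsp m v"
  by (simp add: Nsp_def dinner_Tsp1 dinner_Tsp2)

end



lemma real_quad_bound:
  fixes A B R L :: real
  assumes q: "\<And>t. 0 \<le> A + 2 * t * R + t\<^sup>2 * B" and AL: "A \<le> L\<^sup>2 * B" and L: "0 \<le> L" and B: "0 \<le> B"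
  shows "\<bar>R\<bar> \<le> L * B"
proof (cases "B = 0")
  case True
  then have "A \<le> 0" using AL by simp
  have "0 \<le> A + 2 * R" using q[of 1] True by simp
  moreover have "0 \<le> A - 2 * R" using q[of "-1"] True by simp
  ultimately show ?thesis using \<open>A \<le> 0\<close> True by simp
next
  case False
  then have Bp: "B > 0" using B by simp
  show ?thesis
  proof (cases "L = 0")
    case True
    then have "A \<le> 0" using AL by simp
    have "0 \<le> A + 2 * (- R / B) * R + (- R / B)\<^sup>2 * B" by (rule q)
    also have "\<dots> = A - R\<^sup>2 / B" using Bp by (simp add: power2_eq_square field_simps)
    finally have "R\<^sup>2 / B \<le> 0" using \<open>A \<le> 0\<close> by simp
    then have "R\<^sup>2 \<le> 0" using Bp by (simp add: divide_le_0_iff)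
    then have "R = 0" by simp
    then show ?thesis using True by simp
  next
    case False
    then have Lp: "L > 0" using L by simp
    have "0 \<le> A + 2 * (- L) * R + (- L)\<^sup>2 * B" by (rule q)
    then have "2 * L * R \<le> 2 * L * (L * B)" using AL by (simp add: power2_eq_square algebra_simps)
    then have 1: "R \<le> L * B" using Lp by simp
    have "0 \<le> A + 2 * L * R + L\<^sup>2 * B" by (rule q)
    then have "2 * L * (- R) \<le> 2 * L * (L * B)" using AL by (simp add: power2_eq_square algebra_simps)
    then have "L * (- R) \<le> L * (L * B)" by (simp add: algebra_simps)
    then have 2: "- R \<le> L * B" using Lp mult_le_cancel_left_pos[of L "- R" "L * B"] by linarith
    show ?thesis using 1 2 by simp
  qed
qed

lemma dinner_expand_t:
  "Re (dinner m (h + dscale (complex_of_real t) v) (h + dscale (complex_of_real t) v)) =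
   Re (dinner m h h) + 2 * t * Re (dinner m h v) + t\<^sup>2 * Re (dinner m v v)"
proof -
  have "Re (dinner m v h) = Re (dinner m h v)" by (subst dinner_cnj) simp
  then show ?thesis
    by (simp add: dinner_add1 dinner_add2 dinner_scale1 dinner_scale2 power2_eq_square algebra_simps)
qed

lemma gen_bound:
  assumes "Re (dinner m h h) \<le> L\<^sup>2 * Re (dinner m v v)" "0 \<le> L"
  shows "\<bar>Re (dinner m h v)\<bar> \<le> L * Re (dinner m v v)"
proof (rule real_quad_bound[OF _ assms(1) assms(2) dinner_self_nonneg])
  fix t
  show "0 \<le> Re (dinner m h h) + 2 * t * Re (dinner m h v) + t\<^sup>2 * Re (dinner m v v)"
    using dinner_self_nonneg[of m "h + dscale (complex_of_real t) v"] by (simp add: dinner_expand_t)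
qed

lemma rinner_self_nonneg: "0 \<le> rinner n x x"
  by (simp add: rinner_def sum_nonneg)

lemma rnorm_nonneg: "0 \<le> rnorm n x"
  unfolding rnorm_def by (rule real_sqrt_ge_zero[OF rinner_self_nonneg])

lemma rnorm_sq: "(rnorm n x)\<^sup>2 = rinner n x x"
  by (simp add: rnorm_def rinner_self_nonneg)

context spin
begin

lemma vop_sq: "u \<in> Vm m \<Longrightarrow> vop x (vop x u) = dscale (- complex_of_real (rinner n x x)) u"
proof -
  assume u: "u \<in> Vm m"
  have "vop x (vop x u) = eop m (mmul m (Mx n E x) (Mx n E x)) u" unfolding vop_def by (rule mop_mop)
  also have "\<dots> = dscale (- complex_of_real (rinner n x x)) (Tsp m u)"
  proof (rule eop_scalar, intro allI impI)
    fix k l assume kl: "k < m" "l < m"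
    from Mx_cliff[OF kl, of x x]
    show "mmul m (Mx n E x) (Mx n E x) k l = (if k = l then - complex_of_real (rinner n x x) else 0)"
      by (auto split: if_splits)
  qed
  finally show ?thesis using Tsp_Vm[OF u] by simp
qed

lemma dinner_vop_self: "u \<in> Vm m \<Longrightarrow> dinner m (vop x u) (vop x u) = complex_of_real (rinner n x x) * dinner m u u"
  by (simp add: dinner_vop vop_sq dinner_scale2)

lemma X_bound_gen:
  assumes u: "u \<in> Vm m"
  shows "\<bar>Re (dinner m (vop x (de0 u)) u)\<bar> \<le> rnorm n x * Re (dinner m u u)"
proof (rule gen_bound)
  show "Re (dinner m (vop x (de0 u)) (vop x (de0 u))) \<le> (rnorm n x)\<^sup>2 * Re (dinner m u u)"
    using de0_Vm[OF u] rinner_self_nonneg[of n x] by (simp add: dinner_vop_self dinner_de0_self rnorm_sq)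
  show "0 \<le> rnorm n x" by (rule rnorm_nonneg)
qed

lemma Y_bound_gen:
  assumes u: "u \<in> Vm m"
  shows "\<bar>Re (dinner m (dscale \<i> (vop y u)) u)\<bar> \<le> rnorm n y * Re (dinner m u u)"
proof (rule gen_bound)
  show "Re (dinner m (dscale \<i> (vop y u)) (dscale \<i> (vop y u))) \<le> (rnorm n y)\<^sup>2 * Re (dinner m u u)"
    using u rinner_self_nonneg[of n y] by (simp add: dinner_scale1 dinner_scale2 dinner_vop_self rnorm_sq)
  show "0 \<le> rnorm n y" by (rule rnorm_nonneg)
qed

lemma norm_le_from_self:
  assumes "rinner n z z \<le> rnorm n z * N" "0 \<le> N"
  shows "rnorm n z \<le> N"
proof (cases "rnorm n z = 0")
  case True then show ?thesis using assms by simp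
next
  case False
  then have p: "rnorm n z > 0" using rinner_self_nonneg[of n z] by (simp add: rnorm_def)
  have "rnorm n z * rnorm n z \<le> rnorm n z * N" using assms(1) rnorm_sq[of n z] by (simp add: power2_eq_square)
  then show ?thesis using p by simp
qed

lemma X_norm_le: "u \<in> Vm m \<Longrightarrow> rnorm n (Xsp m E u) \<le> Nsp m u"
  using X_bound_gen[of u "Xsp m E u"] X_link[of "Xsp m E u" u] dinner_self_nonneg[of m u]
  by (intro norm_le_from_self) (auto simp: Nsp_def)

lemma Y_norm_le: "u \<in> Vm m \<Longrightarrow> rnorm n (Ysp m E u) \<le> Nsp m u"
  using Y_bound_gen[of u "Ysp m E u"] Y_link[of "Ysp m E u" u] dinner_self_nonneg[of m u]
  by (intro norm_le_from_self) (auto simp: Nsp_def)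

end



lemma eig_step:
  fixes J Q :: "spinor2 \<Rightarrow> spinor2" and Pr :: "spinor2 \<Rightarrow> bool"
  assumes u: "u \<in> Vm m" "u \<noteq> 0" "Pr u"
    and Jadd: "\<And>a b. J (a + b) = J a + J b" and Qadd: "\<And>a b. Q (a + b) = Q a + Q b"
    and JV: "\<And>a. a \<in> Vm m \<Longrightarrow> J a \<in> Vm m" and QV: "\<And>a. a \<in> Vm m \<Longrightarrow> Q a \<in> Vm m"
    and JJ: "\<And>a. a \<in> Vm m \<Longrightarrow> J (J a) = a" and QQ: "\<And>a. a \<in> Vm m \<Longrightarrow> Q (Q a) = a"
    and QJ: "\<And>a. a \<in> Vm m \<Longrightarrow> Q (J a) = - J (Q a)"
    and PrJ: "\<And>a. a \<in> Vm m \<Longrightarrow> Pr a \<Longrightarrow> Pr (J a)" and PrQ: "\<And>a. a \<in> Vm m \<Longrightarrow> Pr a \<Longrightarrow> Pr (Q a)"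
    and Pradd: "\<And>a b. Pr a \<Longrightarrow> Pr b \<Longrightarrow> Pr (a + b)"
  shows "\<exists>w. w \<in> Vm m \<and> w \<noteq> 0 \<and> J w = w \<and> Pr w"
proof (cases "u + J u = 0")
  case False
  have "J (u + J u) = u + J u" using Jadd JJ[OF u(1)] by (simp add: add.commute)
  moreover have "u + J u \<in> Vm m" using u JV add_Vm by blast
  moreover have "Pr (u + J u)" using u PrJ Pradd by blast
  ultimately show ?thesis using False by blast
next
  case True
  then have Ju: "J u = - u" by (simp add: eq_neg_iff_add_eq_0 add.commute)
  have Q0: "Q 0 = 0" using Qadd[of 0 0] by simp
  have Qneg: "Q (- a) = - Q a" for a using Qadd[of a "- a"] Q0 by (simp add: eq_neg_iff_add_eq_0 add.commute)
  have "J (Q u) = Q u" using QJ[OF u(1)] Ju Qneg by (metis minus_minus)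
  moreover have "Q u \<noteq> 0"
  proof
    assume "Q u = 0"
    then have "Q (Q u) = 0" using Q0 by simp
    then show False using QQ[OF u(1)] u(2) by simp
  qed
  ultimately show ?thesis using QV u PrQ by blast
qed

lemma Vm_nonzero_pos:
  assumes "w \<in> Vm m" "w \<noteq> 0"
  shows "0 < Re (dinner m w w)"
proof -
  obtain k where k: "fst w k \<noteq> 0 \<or> snd w k \<noteq> 0"
    using assms(2) by (cases w) (auto simp: fun_eq_iff zero_prod_def)
  then have km: "k < m" using assms(1) by (auto simp: Vm_def not_le[symmetric])
  have a: "(cmod (fst w k))\<^sup>2 \<le> (\<Sum>k<m. (cmod (fst w k))\<^sup>2)"
    using km by (intro member_le_sum) auto
  have b: "(cmod (snd w k))\<^sup>2 \<le> (\<Sum>k<m. (cmod (snd w k))\<^sup>2)"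
    using km by (intro member_le_sum) auto
  have c: "0 \<le> (\<Sum>k<m. (cmod (fst w k))\<^sup>2)" "0 \<le> (\<Sum>k<m. (cmod (snd w k))\<^sup>2)"
    by (auto intro: sum_nonneg)
  have "0 < (cmod (fst w k))\<^sup>2 + (cmod (snd w k))\<^sup>2" using k by (auto simp: add_pos_nonneg add_nonneg_pos)
  then show ?thesis unfolding dinner_self_Re using a b c by linarith
qed

lemma vec_eq_from:
  assumes "rinner n x x = 1" "rinner n x z = 1" "rinner n z z \<le> 1"
  shows "\<forall>i<n. z i = x i"
proof -
  have "(\<Sum>i<n. (z i - x i)\<^sup>2) = rinner n z z - 2 * rinner n x z + rinner n x x"
    by (simp add: rinner_def power2_eq_square algebra_simps sum.distrib sum_subtractf sum_distrib_left)
  also have "\<dots> \<le> 0" using assms by simp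
  finally have "(\<Sum>i<n. (z i - x i)\<^sup>2) = 0" by (meson antisym sum_nonneg zero_le_power2)
  then have "\<forall>i\<in>{..<n}. (z i - x i)\<^sup>2 = 0" by (subst (asm) sum_nonneg_eq_0_iff) auto
  then show ?thesis by auto
qed

lemma rinner_comm: "rinner n x y = rinner n y x"
  by (simp add: rinner_def mult.commute)

lemma rinner_cong: "(\<And>i. i < n \<Longrightarrow> z i = x i) \<Longrightarrow> rinner n z w = rinner n x w"
  by (simp add: rinner_def)

context spin
begin

lemma de0_vop: "de0 (vop x w) = - vop x (de0 w)"
  unfolding vop_def mop_de0 by simp

lemma vop_add: "vop x (a + b) = vop x a + vop x b" unfolding vop_def by (rule mop_add)
lemma vop_scale: "vop x (dscale c a) = dscale c (vop x a)" unfolding vop_def by (rule mop_scale)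
lemma vop_uminus: "vop x (- a) = - vop x a" unfolding vop_def by (rule mop_uminus)

lemma pure_exists:
  assumes xx: "rinner n x x = 1" and yy: "rinner n y y = 1" and zz: "rinner n z z = 1"
    and xy: "rinner n x y = 0" and zx: "rinner n z x = 0" and zy: "rinner n z y = 0"
  shows "\<exists>u. u \<in> Vm m \<and> Nsp m u = 1 \<and> vop x (de0 u) = u \<and> dscale \<i> (vop y u) = u"
proof -
  define J1 where "J1 a = vop x (de0 a)" for a
  define J2 where "J2 a = dscale \<i> (vop y a)" for a
  define Z where "Z a = vop z (de0 a)" for a
  have J1add: "J1 (a + b) = J1 a + J1 b" for a b by (simp add: J1_def de0_add vop_add)
  have J2add: "J2 (a + b) = J2 a + J2 b" for a b by (simp add: J2_def vop_add dscale_add)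
  have Zadd: "Z (a + b) = Z a + Z b" for a b by (simp add: Z_def de0_add vop_add)
  have de0add: "de0 (a + b) = de0 a + de0 b" for a b by (rule de0_add)
  have J1V: "J1 a \<in> Vm m" for a by (simp add: J1_def vop_Vm)
  have J2V: "J2 a \<in> Vm m" for a by (simp add: J2_def vop_Vm dscale_Vm)
  have ZV: "Z a \<in> Vm m" for a by (simp add: Z_def vop_Vm)
  have J1J1: "J1 (J1 a) = a" if "a \<in> Vm m" for a
    using that xx by (simp add: J1_def de0_vop vop_uminus vop_sq dscale_minus_left)
  have J2J2: "J2 (J2 a) = a" if "a \<in> Vm m" for a
    using that yy by (simp add: J2_def vop_scale vop_sq)
  have ZZ: "Z (Z a) = a" if "a \<in> Vm m" for a
    using that zz by (simp add: Z_def de0_vop vop_uminus vop_sq dscale_minus_left)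
  have WW: "de0 (de0 a) = a" for a by simp
  have WJ2: "de0 (J2 a) = - J2 (de0 a)" for a
    by (simp add: J2_def de0_scale de0_vop dscale_uminus)
  have J1J2: "J1 (J2 a) = J2 (J1 a)" if "a \<in> Vm m" for a
  proof -
    have "vop y (vop x (de0 a)) = - vop x (vop y (de0 a))"
      using vop_cliffV[OF de0_Vm[OF that], of y x] xy rinner_comm[of n y x] by simp
    then show ?thesis by (simp add: J1_def J2_def de0_scale de0_vop vop_scale vop_uminus dscale_uminus)
  qed
  have ZJ1: "Z (J1 a) = - J1 (Z a)" if "a \<in> Vm m" for a
  proof -
    have "vop x (vop z a) = - vop z (vop x a)"
      using vop_cliffV[OF that, of x z] zx rinner_comm[of n x z] by simp
    then show ?thesis by (simp add: J1_def Z_def de0_vop vop_uminus)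
  qed
  have ZJ2: "Z (J2 a) = J2 (Z a)" if "a \<in> Vm m" for a
  proof -
    have "vop y (vop z (de0 a)) = - vop z (vop y (de0 a))"
      using vop_cliffV[OF de0_Vm[OF that], of y z] zy rinner_comm[of n y z] by simp
    then show ?thesis by (simp add: J2_def Z_def de0_scale de0_vop vop_scale vop_uminus dscale_uminus)
  qed
  define u0 :: spinor2 where "u0 = (\<lambda>k. if k = 0 then 1 else 0, \<lambda>k. 0)"
  have u0V: "u0 \<in> Vm m" using m_pos by (simp add: u0_def Vm_def)
  have u0nz: "u0 \<noteq> 0" by (simp add: u0_def zero_prod_def fun_eq_iff)
  obtain u1 where u1: "u1 \<in> Vm m" "u1 \<noteq> 0" "J2 u1 = u1" "True"
    using eig_step[of u0 m "\<lambda>_. True" J2 de0, OF u0V u0nz _ J2add de0add J2V de0_Vm J2J2 WW WJ2]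
    by blast
  obtain u2 where u2: "u2 \<in> Vm m" "u2 \<noteq> 0" "J1 u2 = u2" "u2 \<in> Vm m \<and> J2 u2 = u2"
  proof -
    have "\<exists>w. w \<in> Vm m \<and> w \<noteq> 0 \<and> J1 w = w \<and> (w \<in> Vm m \<and> J2 w = w)"
    proof (rule eig_step[of u1 m "\<lambda>a. a \<in> Vm m \<and> J2 a = a" J1 Z, OF u1(1,2) _ J1add Zadd J1V ZV J1J1 ZZ ZJ1])
      show "u1 \<in> Vm m \<and> J2 u1 = u1" using u1 by blast
      show "J1 a \<in> Vm m \<and> J2 (J1 a) = J1 a" if "a \<in> Vm m" "a \<in> Vm m \<and> J2 a = a" for a
        using that J1J2[of a] J1V by simp
      show "Z a \<in> Vm m \<and> J2 (Z a) = Z a" if "a \<in> Vm m" "a \<in> Vm m \<and> J2 a = a" for a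
        using that ZJ2[of a] ZV by simp
      show "a + b \<in> Vm m \<and> J2 (a + b) = a + b" if "a \<in> Vm m \<and> J2 a = a" "b \<in> Vm m \<and> J2 b = b" for a b
        using that J2add[of a b] add_Vm[of a m b] by simp
    qed
    then show ?thesis using that by blast
  qed
  define N where "N = Re (dinner m u2 u2)"
  have Np: "0 < N" unfolding N_def by (rule Vm_nonzero_pos[OF u2(1,2)])
  define c where "c = complex_of_real (1 / sqrt N)"
  define u where "u = dscale c u2"
  have "u \<in> Vm m" unfolding u_def by (rule dscale_Vm[OF u2(1)])
  moreover have "Nsp m u = 1"
  proof -
    have "dinner m u u = c * cnj c * dinner m u2 u2" by (simp add: u_def dinner_scale1 dinner_scale2)
    also have "dinner m u2 u2 = complex_of_real N" unfolding N_def by (rule dinner_self_eq)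
    also have "c * cnj c = complex_of_real ((1 / sqrt N) * (1 / sqrt N))"
      unfolding c_def by (simp only: complex_cnj_complex_of_real of_real_mult)
    finally have "dinner m u u = complex_of_real ((1 / sqrt N) * (1 / sqrt N) * N)"
      by (simp only: of_real_mult)
    also have "(1 / sqrt N) * (1 / sqrt N) * N = 1" using Np by (simp add: field_simps)
    finally show ?thesis by (simp add: Nsp_def)
  qed
  moreover have "vop x (de0 u) = u" using u2(3) by (simp add: J1_def u_def de0_scale vop_scale)
  moreover have "dscale \<i> (vop y u) = u"
  proof -
    have "dscale c (dscale \<i> (vop y u2)) = dscale c u2" using u2(4) by (simp add: J2_def)
    then show ?thesis by (simp add: u_def vop_scale mult.commute)
  qed
  ultimately show ?thesis by blast
qed

lemma pure_props:
  assumes u: "u \<in> Vm m" "Nsp m u = 1" "vop x (de0 u) = u" "dscale \<i> (vop y u) = u"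
    and xx: "rinner n x x = 1" and yy: "rinner n y y = 1"
  shows "\<forall>i<n. Xsp m E u i = x i" "\<forall>i<n. Ysp m E u i = y i"
    "rnorm n (Xsp m E u) = 1" "rnorm n (Ysp m E u) = 1"
proof -
  have Xx: "rinner n x (Xsp m E u) = 1" using u by (simp add: X_link Nsp_def)
  have Yy: "rinner n y (Ysp m E u) = 1" using u by (simp add: Y_link Nsp_def)
  have "rnorm n (Xsp m E u) \<le> 1" using X_norm_le[OF u(1)] u(2) by simp
  then have XX: "rinner n (Xsp m E u) (Xsp m E u) \<le> 1"
    using rnorm_sq[of n "Xsp m E u"] rnorm_nonneg[of n "Xsp m E u"]
    by (metis power_le_one one_power2)
  have "rnorm n (Ysp m E u) \<le> 1" using Y_norm_le[OF u(1)] u(2) by simp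
  then have YY: "rinner n (Ysp m E u) (Ysp m E u) \<le> 1"
    using rnorm_sq[of n "Ysp m E u"] rnorm_nonneg[of n "Ysp m E u"]
    by (metis power_le_one one_power2)
  show X: "\<forall>i<n. Xsp m E u i = x i" by (rule vec_eq_from[OF xx Xx XX])
  show Y: "\<forall>i<n. Ysp m E u i = y i" by (rule vec_eq_from[OF yy Yy YY])
  have "rinner n (Xsp m E u) (Xsp m E u) = rinner n x x"
    using X by (simp add: rinner_def)
  then show "rnorm n (Xsp m E u) = 1" using xx by (simp add: rnorm_def)
  have "rinner n (Ysp m E u) (Ysp m E u) = rinner n y y"
    using Y by (simp add: rinner_def)
  then show "rnorm n (Ysp m E u) = 1" using yy by (simp add: rnorm_def)
qed

end



lemma rinner_lin1: "rinner n (\<lambda>i. a * u i + b * v i) w = a * rinner n u w + b * rinner n v w"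
  by (simp add: rinner_def sum.distrib sum_distrib_left algebra_simps)
lemma rinner_lin2: "rinner n w (\<lambda>i. a * u i + b * v i) = a * rinner n w u + b * rinner n w v"
  by (simp add: rinner_def sum.distrib sum_distrib_left algebra_simps)
lemma rinner_scale1: "rinner n (\<lambda>i. a * u i) w = a * rinner n u w"
  by (simp add: rinner_def sum_distrib_left algebra_simps)
lemma rinner_scale2: "rinner n w (\<lambda>i. a * u i) = a * rinner n w u"
  by (simp add: rinner_def sum_distrib_left algebra_simps)
lemma rinner_cong2: "(\<And>i. i < n \<Longrightarrow> z i = x i) \<Longrightarrow> rinner n w z = rinner n w x"
  by (simp add: rinner_def)

definition ek :: "nat \<Rightarrow> nat \<Rightarrow> real" where "ek k = (\<lambda>i. if i = k then 1 else 0)"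

lemma rinner_ek: "k < n \<Longrightarrow> rinner n (ek k) v = v k"
proof -
  assume k: "k < n"
  have "rinner n (ek k) v = (\<Sum>i<n. if i = k then v i else 0)"
    unfolding rinner_def ek_def by (intro sum.cong) auto
  then show ?thesis using k by (simp add: sum.delta)
qed

lemma rinner_comb3: "rinner n (\<lambda>i. a i - b * c i - d * e i) w = rinner n a w - b * rinner n c w - d * rinner n e w"
proof -
  have "rinner n (\<lambda>i. a i - b * c i - d * e i) w = (\<Sum>i<n. a i * w i - b * (c i * w i) - d * (e i * w i))"
    unfolding rinner_def by (intro sum.cong) (auto simp: algebra_simps)
  also have "\<dots> = rinner n a w - b * rinner n c w - d * rinner n e w"
    by (simp add: sum_subtractf sum_distrib_left rinner_def)
  finally show ?thesis .
qed

lemma rinner_comb2: "rinner n (\<lambda>i. a i - b * c i) w = rinner n a w - b * rinner n c w"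
proof -
  have "rinner n (\<lambda>i. a i - b * c i) w = (\<Sum>i<n. a i * w i - b * (c i * w i))"
    unfolding rinner_def by (intro sum.cong) (auto simp: algebra_simps)
  also have "\<dots> = rinner n a w - b * rinner n c w"
    by (simp add: sum_subtractf sum_distrib_left rinner_def)
  finally show ?thesis .
qed
lemma rinner_ek_ek: "k < n \<Longrightarrow> rinner n (ek k) (ek k) = 1"
  by (simp add: rinner_ek) (simp add: ek_def)

lemma normalize_vec:
  assumes "0 < rinner n v v"
  shows "\<exists>g. rinner n g g = 1 \<and> (\<forall>i. v i = sqrt (rinner n v v) * g i)"
proof -
  define s where "s = sqrt (rinner n v v)"
  have sp: "s > 0" using assms by (simp add: s_def)
  define g where "g i = v i / s" for i
  have "rinner n g g = rinner n v v / (s * s)"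
    by (simp add: g_def rinner_def sum_divide_distrib power2_eq_square)
  also have "s * s = rinner n v v" using assms by (simp add: s_def)
  finally have "rinner n g g = 1" using assms by simp
  moreover have "\<forall>i. v i = s * g i" using sp by (simp add: g_def)
  ultimately show ?thesis unfolding s_def by blast
qed

lemma sum_sq_le_rinner:
  assumes "K \<le> n"
  shows "(\<Sum>k<K. (x k)\<^sup>2) \<le> rinner n x x"
proof -
  have "(\<Sum>k<K. (x k)\<^sup>2) \<le> (\<Sum>k<n. (x k)\<^sup>2)"
    using assms by (intro sum_mono2) auto
  then show ?thesis by (simp add: rinner_def power2_eq_square)
qed

lemma third_vec:
  assumes n3: "3 \<le> n" and xx: "rinner n x x = 1" and yy: "rinner n y y = 1" and xy: "rinner n x y = 0"
  shows "\<exists>z. rinner n z z = 1 \<and> rinner n z x = 0 \<and> rinner n z y = 0"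
proof -
  define r where "r k = (\<lambda>i. ek k i - x k * x i - y k * y i)" for k
  have yx: "rinner n y x = 0" using xy rinner_comm by metis
  have rx: "rinner n (r k) x = 0" and ry: "rinner n (r k) y = 0" if "k < n" for k
  proof -
    have "rinner n (r k) x = rinner n (ek k) x - x k * rinner n x x - y k * rinner n y x"
      unfolding r_def by (rule rinner_comb3)
    then show "rinner n (r k) x = 0" using that xx yx by (simp add: rinner_ek)
    have "rinner n (r k) y = rinner n (ek k) y - x k * rinner n x y - y k * rinner n y y"
      unfolding r_def by (rule rinner_comb3)
    then show "rinner n (r k) y = 0" using that yy xy by (simp add: rinner_ek)
  qed
  have rr: "rinner n (r k) (r k) = 1 - (x k)\<^sup>2 - (y k)\<^sup>2" if "k < n" for k
  proof -
    have "rinner n (r k) (r k) = rinner n (ek k) (r k) - x k * rinner n x (r k) - y k * rinner n y (r k)"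
      unfolding r_def[of k] by (rule rinner_comb3)
    also have "rinner n x (r k) = 0" using rx[OF that] rinner_comm by metis
    also have "rinner n y (r k) = 0" using ry[OF that] rinner_comm by metis
    also have "rinner n (ek k) (r k) = r k k" using that by (simp add: rinner_ek)
    finally show ?thesis by (simp add: r_def ek_def power2_eq_square)
  qed
  have "(\<Sum>k<3. rinner n (r k) (r k)) = 3 - (\<Sum>k<3. (x k)\<^sup>2) - (\<Sum>k<3. (y k)\<^sup>2)"
    using n3 rr by (simp add: sum_subtractf)
  also have "\<dots> \<ge> 1" using sum_sq_le_rinner[OF n3, of x] sum_sq_le_rinner[OF n3, of y] xx yy by simp
  finally have "1 \<le> (\<Sum>k<3. rinner n (r k) (r k))" .
  then obtain k where k: "k < 3" "0 < rinner n (r k) (r k)"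
    by (metis (no_types, lifting) lessThan_iff not_le sum_nonpos zero_less_one order.strict_trans2)
  then obtain g where g: "rinner n g g = 1" "\<forall>i. r k i = sqrt (rinner n (r k) (r k)) * g i"
    using normalize_vec by blast
  define s where "s = sqrt (rinner n (r k) (r k))"
  have sp: "s > 0" using k by (simp add: s_def)
  have rk: "r k = (\<lambda>i. s * g i)" using g(2) by (simp add: s_def fun_eq_iff)
  have "s * rinner n g x = 0" using rx[of k] k n3 rk by (simp add: rinner_scale1)
  moreover have "s * rinner n g y = 0" using ry[of k] k n3 rk by (simp add: rinner_scale1)
  ultimately show ?thesis using g(1) sp by auto
qed

lemma second_vec:
  assumes n2: "2 \<le> n" and xx: "rinner n x x = 1"
  shows "\<exists>z. rinner n z z = 1 \<and> rinner n z x = 0"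
proof -
  define r where "r k = (\<lambda>i. ek k i - x k * x i)" for k
  have rx: "rinner n (r k) x = 0" if "k < n" for k
  proof -
    have "rinner n (r k) x = rinner n (ek k) x - x k * rinner n x x"
      unfolding r_def by (rule rinner_comb2)
    then show "rinner n (r k) x = 0" using that xx by (simp add: rinner_ek)
  qed
  have rr: "rinner n (r k) (r k) = 1 - (x k)\<^sup>2" if "k < n" for k
  proof -
    have "rinner n (r k) (r k) = rinner n (ek k) (r k) - x k * rinner n x (r k)"
      unfolding r_def[of k] by (rule rinner_comb2)
    also have "rinner n x (r k) = 0" using rx[OF that] rinner_comm by metis
    also have "rinner n (ek k) (r k) = r k k" using that by (simp add: rinner_ek)
    finally show ?thesis by (simp add: r_def ek_def power2_eq_square)
  qed
  have "(\<Sum>k<2. rinner n (r k) (r k)) = 2 - (\<Sum>k<2. (x k)\<^sup>2)"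
    using n2 rr by (simp add: sum_subtractf)
  also have "\<dots> \<ge> 1" using sum_sq_le_rinner[OF n2, of x] xx by simp
  finally have "1 \<le> (\<Sum>k<2. rinner n (r k) (r k))" .
  then obtain k where k: "k < 2" "0 < rinner n (r k) (r k)"
    by (metis (no_types, lifting) lessThan_iff not_le sum_nonpos zero_less_one order.strict_trans2)
  then obtain g where g: "rinner n g g = 1" "\<forall>i. r k i = sqrt (rinner n (r k) (r k)) * g i"
    using normalize_vec by blast
  define s where "s = sqrt (rinner n (r k) (r k))"
  have sp: "s > 0" using k by (simp add: s_def)
  have rk: "r k = (\<lambda>i. s * g i)" using g(2) by (simp add: s_def fun_eq_iff)
  have "s * rinner n g x = 0" using rx[of k] k n2 rk by (simp add: rinner_scale1)
  then show ?thesis using g(1) sp by auto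
qed




lemma dinner_de0_real: "Im (dinner m (de0 v) v) = 0"
proof -
  have "dinner m (de0 v) v = cinner m (snd v) (fst v) + cnj (cinner m (snd v) (fst v))"
    by (simp add: dinner_def de0_def cinner_def mult.commute)
  then show ?thesis by simp
qed

context spin
begin

lemma dinner_vop2: "dinner m a (vop x b) = - dinner m (vop x a) b"
  by (simp add: dinner_vop)

lemma F_link: "Ffun n m E C P A v = Re (dinner m (vop C (de0 v)) v) + Re (dinner m (dscale \<i> (vop P v)) v) + pair2 n A (omega m E v)"
  by (simp add: Ffun_def X_link Y_link)

lemma case1_lower:
  assumes v: "v \<in> Vm m" and D: "0 \<le> D" "D\<^sup>2 = rinner n C C * rinner n P P - (rinner n P C)\<^sup>2"
  shows "- sqrt (rinner n C C + rinner n P P + 2 * D) * Re (dinner m v v)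
      \<le> Re (dinner m (vop C (de0 v)) v) + Re (dinner m (dscale \<i> (vop P v)) v)"
proof -
  define w where "w = de0 v"
  have w: "w \<in> Vm m" unfolding w_def by (rule de0_Vm[OF v])
  have Nw: "dinner m w w = dinner m v v" unfolding w_def by (rule dinner_de0_self)
  define s where "s = rinner n P C"
  define N where "N = Re (dinner m v v)"
  have N0: "0 \<le> N" unfolding N_def by (rule dinner_self_nonneg)
  have Nc: "dinner m v v = complex_of_real N" unfolding N_def by (rule dinner_self_eq)
  define h where "h = vop C w + dscale \<i> (vop P v)"
  define cr where "cr = dinner m (vop C w) (dscale \<i> (vop P v))"
  have cr: "cr = \<i> * dinner m (vop P (vop C w)) v"
    by (simp add: cr_def dinner_scale2 dinner_vop2)
  have hh: "dinner m h h = complex_of_real (rinner n C C) * dinner m v v + complex_of_real (rinner n P P) * dinner m v v + cr + cnj cr"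
  proof -
    have "dinner m h h = dinner m (vop C w) (vop C w) + dinner m (dscale \<i> (vop P v)) (dscale \<i> (vop P v)) + cr
        + dinner m (dscale \<i> (vop P v)) (vop C w)"
      by (simp add: h_def cr_def dinner_add1 dinner_add2)
    also have "dinner m (dscale \<i> (vop P v)) (vop C w) = cnj cr"
      by (simp add: cr_def dinner_cnj[of m "dscale \<i> (vop P v)"])
    finally show ?thesis using w v Nw by (simp add: dinner_vop_self dinner_scale1 dinner_scale2)
  qed
  define G where "G = vop P (vop C w) + dscale (complex_of_real s) w"
  define K where "K = dscale \<i> G"
  have KV: "Re (dinner m K v) = Re cr"
  proof -
    have "dinner m K v = \<i> * dinner m (vop P (vop C w)) v + \<i> * complex_of_real s * dinner m w v"
      by (simp add: K_def G_def dinner_scale1 dinner_add1 algebra_simps)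
    moreover have "Im (dinner m w v) = 0" unfolding w_def by (rule dinner_de0_real)
    ultimately show ?thesis using cr by simp
  qed
  have GG: "dinner m G G = complex_of_real (rinner n C C * rinner n P P - s\<^sup>2) * dinner m v v"
  proof -
    have cw: "vop C w \<in> Vm m" by (rule vop_Vm)
    have 1: "dinner m (vop P (vop C w)) (vop P (vop C w)) = complex_of_real (rinner n P P) * (complex_of_real (rinner n C C) * dinner m w w)"
      using cw w by (simp add: dinner_vop_self)
    have 2: "dinner m (vop P (vop C w)) w + dinner m w (vop P (vop C w)) = - 2 * complex_of_real s * dinner m w w"
    proof -
      have "dinner m w (vop P (vop C w)) = dinner m (vop C (vop P w)) w"
        by (simp add: dinner_vop2)
      then have "dinner m (vop P (vop C w)) w + dinner m w (vop P (vop C w)) =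
          dinner m (vop P (vop C w) + vop C (vop P w)) w" by (simp add: dinner_add1)
      also have "vop P (vop C w) + vop C (vop P w) = dscale (- 2 * complex_of_real s) w"
        using vop_cliff[of P C w] Tsp_Vm[OF w] by (simp add: s_def)
      finally show ?thesis by (simp add: dinner_scale1)
    qed
    have "dinner m G G = dinner m (vop P (vop C w)) (vop P (vop C w))
       + complex_of_real s * (dinner m (vop P (vop C w)) w + dinner m w (vop P (vop C w)))
       + complex_of_real s * complex_of_real s * dinner m w w"
      by (simp add: G_def dinner_add1 dinner_add2 dinner_scale1 dinner_scale2 algebra_simps)
    also have "\<dots> = complex_of_real (rinner n C C * rinner n P P - s\<^sup>2) * dinner m w w"
      unfolding 1 2 by (simp add: algebra_simps power2_eq_square)
    finally show ?thesis using Nw by simp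
  qed
  have KK: "Re (dinner m K K) \<le> D\<^sup>2 * N"
  proof -
    have "dinner m K K = dinner m G G" by (simp add: K_def dinner_scale1 dinner_scale2)
    then show ?thesis using GG D(2) Nc by (simp add: s_def)
  qed
  have crb: "\<bar>Re cr\<bar> \<le> D * N"
    using gen_bound[of m K D v] KK D(1) KV by (simp add: N_def)
  define L where "L = sqrt (rinner n C C + rinner n P P + 2 * D)"
  have L0: "0 \<le> L" unfolding L_def using rinner_self_nonneg[of n C] rinner_self_nonneg[of n P] D(1) by simp
  have LL: "L\<^sup>2 = rinner n C C + rinner n P P + 2 * D"
    unfolding L_def using rinner_self_nonneg[of n C] rinner_self_nonneg[of n P] D(1) by simp
  have "Re (dinner m h h) = rinner n C C * N + rinner n P P * N + 2 * Re cr"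
    using hh Nc by simp
  also have "\<dots> \<le> L\<^sup>2 * N" unfolding LL using crb by (simp add: algebra_simps)
  finally have "\<bar>Re (dinner m h v)\<bar> \<le> L * N" using gen_bound[of m h L v] L0 by (simp add: N_def)
  moreover have "Re (dinner m h v) = Re (dinner m (vop C (de0 v)) v) + Re (dinner m (dscale \<i> (vop P v)) v)"
    by (simp add: h_def w_def dinner_add1)
  ultimately show ?thesis by (simp add: L_def N_def)
qed

end



lemma rinner_comb_sq:
  assumes "rinner n e1 e1 = 1" "rinner n e2 e2 = 1" "rinner n e1 e2 = 0"
  shows "rinner n (\<lambda>i. a * e1 i + b * e2 i) (\<lambda>i. a * e1 i + b * e2 i) = a\<^sup>2 + b\<^sup>2"
proof -
  have "rinner n e2 e1 = 0" using assms(3) rinner_comm[of n e2 e1] by simp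
  then show ?thesis using assms by (simp add: rinner_lin1 rinner_lin2 power2_eq_square)
qed

context spin
begin

lemma vop_diff: "vop x (a - b) = vop x a - vop x b" unfolding vop_def by (rule mop_diff)

lemma comm_id:
  assumes u: "u \<in> Vm m" and o12: "rinner n e1 e2 = 0"
  shows "vop e2 (vop e1 (vop x u)) + vop x (vop e1 (vop e2 u)) =
     dscale 2 (vop (\<lambda>i. rinner n x e2 * e1 i + (- rinner n x e1) * e2 i) u)"
proof -
  have xe1: "rinner n e1 x = rinner n x e1" and xe2: "rinner n e2 x = rinner n x e2" and o21: "rinner n e2 e1 = 0"
    using rinner_comm[of n e1 x] rinner_comm[of n e2 x] rinner_comm[of n e2 e1] o12 by simp_all
  have V1: "vop e1 u \<in> Vm m" "vop e2 u \<in> Vm m" "vop x u \<in> Vm m" "vop e1 (vop x u) \<in> Vm m"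
    by (simp_all add: vop_Vm)
  have s1: "vop e1 (vop x u) = - vop x (vop e1 u) - dscale (2 * complex_of_real (rinner n x e1)) u"
    using vop_cliffV[OF u, of e1 x] xe1 by simp
  have s2: "vop e2 (vop x (vop e1 u)) = - vop x (vop e2 (vop e1 u)) - dscale (2 * complex_of_real (rinner n x e2)) (vop e1 u)"
    using vop_cliffV[OF V1(1), of e2 x] xe2 by simp
  have s3: "vop e2 (vop e1 u) = - vop e1 (vop e2 u)"
    using vop_cliffV[OF u, of e2 e1] o21 by simp
  have "vop e2 (vop e1 (vop x u)) = - vop e2 (vop x (vop e1 u)) - dscale (2 * complex_of_real (rinner n x e1)) (vop e2 u)"
    unfolding s1 by (simp add: vop_diff vop_uminus vop_scale)
  also have "\<dots> = vop x (vop e2 (vop e1 u)) + dscale (2 * complex_of_real (rinner n x e2)) (vop e1 u)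
       - dscale (2 * complex_of_real (rinner n x e1)) (vop e2 u)"
    unfolding s2 by simp
  also have "vop x (vop e2 (vop e1 u)) = - vop x (vop e1 (vop e2 u))" unfolding s3 by (simp add: vop_uminus)
  finally have "vop e2 (vop e1 (vop x u)) + vop x (vop e1 (vop e2 u)) =
      dscale (2 * complex_of_real (rinner n x e2)) (vop e1 u) - dscale (2 * complex_of_real (rinner n x e1)) (vop e2 u)"
    by simp
  also have "\<dots> = dscale 2 (vop (\<lambda>i. rinner n x e2 * e1 i + (- rinner n x e1) * e2 i) u)"
    using vop_lin[of "rinner n x e2" e1 "- rinner n x e1" e2 u] by (simp add: dscale_add dscale_minus_left dscale_diff)
  finally show ?thesis .
qed

lemma f_norm:
  assumes w: "w \<in> Vm m" and "rinner n e1 e1 = 1" "rinner n e2 e2 = 1"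
  shows "dinner m (vop e1 (vop e2 w)) (vop e1 (vop e2 w)) = dinner m w w"
  using assms vop_Vm[of e2 w] by (simp add: dinner_vop_self)

lemma f_de0: "vop e1 (vop e2 (de0 v)) = de0 (vop e1 (vop e2 v))"
  by (simp add: de0_vop vop_uminus)


lemma rnorm_wv:
  assumes "rinner n e1 e1 = 1" "rinner n e2 e2 = 1" "rinner n e1 e2 = 0"
  shows "rnorm n (\<lambda>i. a * e1 i + b * e2 i) = sqrt (a\<^sup>2 + b\<^sup>2)"
  unfolding rnorm_def using rinner_comb_sq[OF assms] by simp

lemma case2_lower:
  assumes v: "v \<in> Vm m" and e: "rinner n e1 e1 = 1" "rinner n e2 e2 = 1" "rinner n e1 e2 = 0"
  shows "- sqrt (rinner n P P + a\<^sup>2 + 2 * \<bar>a\<bar> * sqrt ((rinner n P e1)\<^sup>2 + (rinner n P e2)\<^sup>2)) * Re (dinner m v v)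
      \<le> Re (dinner m (dscale \<i> (vop P v)) v) + a * Im (dinner m (vop e1 (vop e2 (de0 v))) v)"
proof -
  define w where "w = de0 v"
  have w: "w \<in> Vm m" unfolding w_def by (rule de0_Vm[OF v])
  have Nw: "dinner m w w = dinner m v v" unfolding w_def by (rule dinner_de0_self)
  define N where "N = Re (dinner m v v)"
  have N0: "0 \<le> N" unfolding N_def by (rule dinner_self_nonneg)
  have Nc: "dinner m v v = complex_of_real N" unfolding N_def by (rule dinner_self_eq)
  define fw where "fw = vop e1 (vop e2 w)"
  define Z where "Z = dinner m (vop P v) fw"
  define wv where "wv = (\<lambda>i. rinner n P e2 * e1 i + (- rinner n P e1) * e2 i)"
  define h where "h = dscale \<i> (vop P v) + dscale (- \<i> * complex_of_real a) fw"
  have hv: "Re (dinner m h v) = Re (dinner m (dscale \<i> (vop P v)) v) + a * Im (dinner m (vop e1 (vop e2 (de0 v))) v)"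
    by (simp add: h_def fw_def w_def dinner_add1 dinner_scale1)
  have hh: "dinner m h h = complex_of_real (rinner n P P) * dinner m v v - complex_of_real a * (Z + cnj Z)
      + complex_of_real (a * a) * dinner m v v"
  proof -
    have 1: "dinner m (vop P v) (vop P v) = complex_of_real (rinner n P P) * dinner m v v"
      using v by (rule dinner_vop_self)
    have 2: "dinner m fw fw = dinner m v v" unfolding fw_def using f_norm[OF w e(1,2)] Nw by simp
    have 3: "dinner m fw (vop P v) = cnj Z" unfolding Z_def by (rule dinner_cnj)
    show ?thesis
      by (simp add: h_def dinner_add1 dinner_add2 dinner_scale1 dinner_scale2 1 2 3 Z_def[symmetric] algebra_simps)
  qed
  have ZZ: "Z + cnj Z = 2 * dinner m (vop wv v) w"
  proof -
    have a: "Z = dinner m (vop e2 (vop e1 (vop P v))) w"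
      by (simp add: Z_def fw_def dinner_vop2)
    have b: "cnj Z = dinner m (vop P (vop e1 (vop e2 v))) w"
    proof -
      have "cnj Z = dinner m fw (vop P v)" unfolding Z_def by (rule dinner_cnj[symmetric])
      also have "fw = de0 (vop e1 (vop e2 v))" by (simp add: fw_def w_def f_de0)
      also have "dinner m (de0 (vop e1 (vop e2 v))) (vop P v) = dinner m (vop e1 (vop e2 v)) (de0 (vop P v))"
        by (rule dinner_de0)
      also have "de0 (vop P v) = - vop P w" by (simp add: w_def de0_vop)
      finally show ?thesis by (simp add: dinner_uminus2 dinner_vop2)
    qed
    have "Z + cnj Z = dinner m (vop e2 (vop e1 (vop P v)) + vop P (vop e1 (vop e2 v))) w"
      unfolding b unfolding a by (simp add: dinner_add1)
    also have "\<dots> = dinner m (dscale 2 (vop wv v)) w" unfolding wv_def using comm_id[OF v e(3)] by simp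
    finally show ?thesis by (simp add: dinner_scale1)
  qed
  have ReZ: "Re (Z + cnj Z) = - 2 * Re (dinner m (vop wv (de0 v)) v)"
  proof -
    have "dinner m (vop wv v) w = - cnj (dinner m (vop wv w) v)"
      by (simp add: dinner_vop dinner_cnj[of m v])
    then show ?thesis unfolding ZZ by (simp add: w_def)
  qed
  have rw: "rnorm n wv = sqrt ((rinner n P e1)\<^sup>2 + (rinner n P e2)\<^sup>2)"
    unfolding wv_def rnorm_wv[OF e] by (simp add: add.commute)
  have bnd: "\<bar>Re (dinner m (vop wv (de0 v)) v)\<bar> \<le> sqrt ((rinner n P e1)\<^sup>2 + (rinner n P e2)\<^sup>2) * N"
    using X_bound_gen[OF v, of wv] rw by (simp add: N_def)
  define r where "r = sqrt ((rinner n P e1)\<^sup>2 + (rinner n P e2)\<^sup>2)"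
  have r0: "0 \<le> r" by (simp add: r_def)
  define L where "L = sqrt (rinner n P P + a\<^sup>2 + 2 * \<bar>a\<bar> * r)"
  have L0: "0 \<le> L" unfolding L_def using rinner_self_nonneg[of n P] r0 by simp
  have LL: "L\<^sup>2 = rinner n P P + a\<^sup>2 + 2 * \<bar>a\<bar> * r"
    unfolding L_def using rinner_self_nonneg[of n P] r0 by simp
  have "Re (dinner m h h) = rinner n P P * N + 2 * a * Re (dinner m (vop wv (de0 v)) v) + a * a * N"
    using hh ReZ Nc by simp
  also have "\<dots> \<le> L\<^sup>2 * N"
  proof -
    have "2 * a * Re (dinner m (vop wv (de0 v)) v) \<le> 2 * \<bar>a\<bar> * (r * N)"
    proof -
      have "2 * a * Re (dinner m (vop wv (de0 v)) v) \<le> 2 * \<bar>a\<bar> * \<bar>Re (dinner m (vop wv (de0 v)) v)\<bar>"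
        by (simp add: abs_mult[symmetric] mult.assoc)
      also have "\<dots> \<le> 2 * \<bar>a\<bar> * (r * N)" using bnd unfolding r_def by (intro mult_left_mono) auto
      finally show ?thesis .
    qed
    then show ?thesis unfolding LL by (simp add: algebra_simps power2_eq_square)
  qed
  finally have "\<bar>Re (dinner m h v)\<bar> \<le> L * N" using gen_bound[of m h L v] L0 by (simp add: N_def)
  then show ?thesis using hv by (simp add: L_def r_def N_def)
qed

lemma case3_lower:
  assumes v: "v \<in> Vm m" and e: "rinner n e1 e1 = 1" "rinner n e2 e2 = 1" "rinner n e1 e2 = 0"
  shows "- sqrt (rinner n C C + a\<^sup>2 + 2 * \<bar>a\<bar> * sqrt ((rinner n C e1)\<^sup>2 + (rinner n C e2)\<^sup>2)) * Re (dinner m v v)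
      \<le> Re (dinner m (vop C (de0 v)) v) + a * Im (dinner m (vop e1 (vop e2 (de0 v))) v)"
proof -
  define w where "w = de0 v"
  have w: "w \<in> Vm m" unfolding w_def by (rule de0_Vm[OF v])
  have Nw: "dinner m w w = dinner m v v" unfolding w_def by (rule dinner_de0_self)
  define N where "N = Re (dinner m v v)"
  have N0: "0 \<le> N" unfolding N_def by (rule dinner_self_nonneg)
  have Nc: "dinner m v v = complex_of_real N" unfolding N_def by (rule dinner_self_eq)
  define fw where "fw = vop e1 (vop e2 w)"
  define Z where "Z = dinner m (vop C w) fw"
  define wv where "wv = (\<lambda>i. rinner n C e2 * e1 i + (- rinner n C e1) * e2 i)"
  define h where "h = vop C w + dscale (- \<i> * complex_of_real a) fw"
  have hv: "Re (dinner m h v) = Re (dinner m (vop C (de0 v)) v) + a * Im (dinner m (vop e1 (vop e2 (de0 v))) v)"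
    by (simp add: h_def fw_def w_def dinner_add1 dinner_scale1)
  have hh: "dinner m h h = complex_of_real (rinner n C C) * dinner m v v + \<i> * complex_of_real a * (Z - cnj Z)
      + complex_of_real (a * a) * dinner m v v"
  proof -
    have 1: "dinner m (vop C w) (vop C w) = complex_of_real (rinner n C C) * dinner m v v"
      using w Nw by (simp add: dinner_vop_self)
    have 2: "dinner m fw fw = dinner m v v" unfolding fw_def using f_norm[OF w e(1,2)] Nw by simp
    have 3: "dinner m fw (vop C w) = cnj Z" unfolding Z_def by (rule dinner_cnj)
    show ?thesis
      by (simp add: h_def dinner_add1 dinner_add2 dinner_scale1 dinner_scale2 1 2 3 Z_def[symmetric] algebra_simps)
  qed
  have ZZ: "Z - cnj Z = 2 * dinner m (vop wv w) w"
  proof -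
    have a: "Z = dinner m (vop e2 (vop e1 (vop C w))) w"
      by (simp add: Z_def fw_def dinner_vop2)
    have b: "cnj Z = - dinner m (vop C (vop e1 (vop e2 w))) w"
    proof -
      have "cnj Z = dinner m fw (vop C w)" unfolding Z_def by (rule dinner_cnj[symmetric])
      then show ?thesis by (simp add: fw_def dinner_vop2)
    qed
    have "Z - cnj Z = dinner m (vop e2 (vop e1 (vop C w)) + vop C (vop e1 (vop e2 w))) w"
      unfolding b unfolding a by (simp add: dinner_add1)
    also have "\<dots> = dinner m (dscale 2 (vop wv w)) w" unfolding wv_def using comm_id[OF w e(3)] by simp
    finally show ?thesis by (simp add: dinner_scale1)
  qed
  have ReZ: "Re (\<i> * (Z - cnj Z)) = 2 * Re (dinner m (dscale \<i> (vop wv w)) w)"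
    unfolding ZZ by (simp add: dinner_scale1)
  have rw: "rnorm n wv = sqrt ((rinner n C e1)\<^sup>2 + (rinner n C e2)\<^sup>2)"
    unfolding wv_def rnorm_wv[OF e] by (simp add: add.commute)
  have bnd: "\<bar>Re (dinner m (dscale \<i> (vop wv w)) w)\<bar> \<le> sqrt ((rinner n C e1)\<^sup>2 + (rinner n C e2)\<^sup>2) * N"
    using Y_bound_gen[OF w, of wv] rw Nw by (simp add: N_def)
  define r where "r = sqrt ((rinner n C e1)\<^sup>2 + (rinner n C e2)\<^sup>2)"
  have r0: "0 \<le> r" by (simp add: r_def)
  define L where "L = sqrt (rinner n C C + a\<^sup>2 + 2 * \<bar>a\<bar> * r)"
  have L0: "0 \<le> L" unfolding L_def using rinner_self_nonneg[of n C] r0 by simp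
  have LL: "L\<^sup>2 = rinner n C C + a\<^sup>2 + 2 * \<bar>a\<bar> * r"
    unfolding L_def using rinner_self_nonneg[of n C] r0 by simp
  have "Re (dinner m h h) = rinner n C C * N + a * Re (\<i> * (Z - cnj Z)) + a * a * N"
  proof -
    have "Re (\<i> * complex_of_real a * (Z - cnj Z)) = a * Re (\<i> * (Z - cnj Z))"
      by (simp add: mult.commute mult.left_commute)
    then show ?thesis using hh Nc by simp
  qed
  also have "\<dots> = rinner n C C * N + 2 * a * Re (dinner m (dscale \<i> (vop wv w)) w) + a * a * N"
    unfolding ReZ by simp
  also have "\<dots> \<le> L\<^sup>2 * N"
  proof -
    have "2 * a * Re (dinner m (dscale \<i> (vop wv w)) w) \<le> 2 * \<bar>a\<bar> * (r * N)"
    proof -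
      have "2 * a * Re (dinner m (dscale \<i> (vop wv w)) w) \<le> 2 * \<bar>a\<bar> * \<bar>Re (dinner m (dscale \<i> (vop wv w)) w)\<bar>"
        by (simp add: abs_mult[symmetric] mult.assoc)
      also have "\<dots> \<le> 2 * \<bar>a\<bar> * (r * N)" using bnd unfolding r_def by (intro mult_left_mono) auto
      finally show ?thesis .
    qed
    then show ?thesis unfolding LL by (simp add: algebra_simps power2_eq_square)
  qed
  finally have "\<bar>Re (dinner m h v)\<bar> \<le> L * N" using gen_bound[of m h L v] L0 by (simp add: N_def)
  then show ?thesis using hv by (simp add: L_def r_def N_def)
qed

end



lemma rinner_pair:
  assumes "rinner n g1 g1 = 1" "rinner n g2 g2 = 1" "rinner n g1 g2 = 0"
  shows "rinner n (\<lambda>i. a * g1 i + b * g2 i) (\<lambda>i. c * g1 i + d * g2 i) = a * c + b * d"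
proof -
  have "rinner n g2 g1 = 0" using assms(3) rinner_comm[of n g2 g1] by simp
  then show ?thesis using assms by (simp add: rinner_lin1 rinner_lin2 algebra_simps)
qed


lemma zero_vec: "rinner n v v = 0 \<Longrightarrow> \<forall>i<n. v i = 0"
proof -
  assume "rinner n v v = 0"
  then have "(\<Sum>i<n. (v i)\<^sup>2) = 0" by (simp add: rinner_def power2_eq_square)
  then have "\<forall>i\<in>{..<n}. (v i)\<^sup>2 = 0" by (subst (asm) sum_nonneg_eq_0_iff) auto
  then show ?thesis by auto
qed

lemma one_frame:
  assumes n2: "2 \<le> n"
  shows "\<exists>g1 g2 a. rinner n g1 g1 = 1 \<and> rinner n g2 g2 = 1 \<and> rinner n g1 g2 = 0 \<and> (\<forall>i<n. v i = a * g1 i)"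
proof -
  obtain g1 a where g1: "rinner n g1 g1 = 1" "\<forall>i<n. v i = a * g1 i"
  proof (cases "rinner n v v = 0")
    case True
    then have "\<forall>i<n. v i = 0 * ek 0 i" by (simp add: zero_vec)
    moreover have "rinner n (ek 0) (ek 0) = 1" using n2 by (simp add: rinner_ek_ek)
    ultimately show ?thesis using that by blast
  next
    case False
    then have "0 < rinner n v v" using rinner_self_nonneg[of n v] by simp
    then obtain g where "rinner n g g = 1" "\<forall>i. v i = sqrt (rinner n v v) * g i"
      using normalize_vec by blast
    then show ?thesis using that by blast
  qed
  obtain g2 where g2: "rinner n g2 g2 = 1" "rinner n g2 g1 = 0" using second_vec[OF n2 g1(1)] by blast
  have "rinner n g1 g2 = 0" using g2(2) rinner_comm[of n g1 g2] by simp
  then show ?thesis using g1 g2 by blast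
qed

lemma frame2:
  assumes n2: "2 \<le> n"
  shows "\<exists>g1 g2 c1 c2 p1 p2. rinner n g1 g1 = 1 \<and> rinner n g2 g2 = 1 \<and> rinner n g1 g2 = 0 \<and>
     (\<forall>i<n. C i = c1 * g1 i + c2 * g2 i) \<and> (\<forall>i<n. P i = p1 * g1 i + p2 * g2 i)"
proof -
  obtain g1 g2 a where g: "rinner n g1 g1 = 1" "rinner n g2 g2 = 1" "rinner n g1 g2 = 0" "\<forall>i<n. C i = a * g1 i"
    using one_frame[OF n2, of C] by blast
  define b where "b = (\<lambda>i. P i - rinner n P g1 * g1 i)"
  have bg1: "rinner n b g1 = 0" unfolding b_def rinner_comb2 using g(1) by simp
  have Cc: "\<forall>i<n. C i = a * g1 i + 0 * g2 i" using g(4) by simp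
  show ?thesis
  proof (cases "rinner n b b = 0")
    case True
    then have "\<forall>i<n. b i = 0" by (rule zero_vec)
    then have "\<forall>i<n. P i = rinner n P g1 * g1 i + 0 * g2 i" by (simp add: b_def)
    then show ?thesis using g Cc by blast
  next
    case False
    then have "0 < rinner n b b" using rinner_self_nonneg[of n b] by simp
    then obtain h where h: "rinner n h h = 1" "\<forall>i. b i = sqrt (rinner n b b) * h i"
      using normalize_vec by blast
    define t where "t = sqrt (rinner n b b)"
    have tp: "t > 0" using \<open>0 < rinner n b b\<close> by (simp add: t_def)
    have bh: "b = (\<lambda>i. t * h i)" using h(2) by (simp add: t_def fun_eq_iff)
    have "t * rinner n h g1 = 0" using bg1 bh by (simp add: rinner_scale1)
    then have "rinner n h g1 = 0" using tp by simp
    then have hg1: "rinner n g1 h = 0" using rinner_comm[of n g1 h] by simp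
    have "\<forall>i<n. P i = rinner n P g1 * g1 i + t * h i"
    proof (intro allI impI)
      fix i assume "i < n"
      have "b i = t * h i" using bh by simp
      then show "P i = rinner n P g1 * g1 i + t * h i" by (simp add: b_def algebra_simps)
    qed
    moreover have "\<forall>i<n. C i = a * g1 i + 0 * h i" using g(4) by simp
    ultimately show ?thesis using g(1) h(1) hg1 by blast
  qed
qed

context spin
begin

lemma rot_id:
  assumes w: "w \<in> Vm m" and e: "rinner n e1 e1 = 1" "rinner n e2 e2 = 1" "rinner n e1 e2 = 0"
    and cs: "c\<^sup>2 + s\<^sup>2 = 1"
  shows "vop (\<lambda>i. c * e1 i + s * e2 i) (vop (\<lambda>i. (- s) * e1 i + c * e2 i) w) = vop e1 (vop e2 w)"
proof -
  define T where "T = vop e1 (vop e2 w)"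
  have o21: "rinner n e2 e1 = 0" using e(3) rinner_comm[of n e2 e1] by simp
  have 1: "vop e1 (vop e1 w) = - w" using vop_sq[OF w, of e1] e(1) by (simp add: dscale_minus_one)
  have 2: "vop e2 (vop e2 w) = - w" using vop_sq[OF w, of e2] e(2) by (simp add: dscale_minus_one)
  have 3: "vop e2 (vop e1 w) = - T" using vop_cliffV[OF w, of e2 e1] o21 by (simp add: T_def)
  have "vop (\<lambda>i. c * e1 i + s * e2 i) (vop (\<lambda>i. (- s) * e1 i + c * e2 i) w)
     = dscale (complex_of_real c) (dscale (complex_of_real (- s)) (- w) + dscale (complex_of_real c) T) +
       dscale (complex_of_real s) (dscale (complex_of_real (- s)) (- T) + dscale (complex_of_real c) (- w))"
    by (simp only: vop_lin vop_add vop_scale 1 2 3 T_def[symmetric])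
  also have "\<dots> = T"
  proof -
    have cs': "complex_of_real c * complex_of_real c + complex_of_real s * complex_of_real s = 1"
      using cs by (metis of_real_1 of_real_add of_real_mult power2_eq_square)
    show ?thesis
      apply (cases w, cases T)
      apply (simp add: dscale_def fun_eq_iff algebra_simps)
      apply (metis cs' mult.commute mult.left_commute distrib_left mult_1_right)
      done
  qed
  finally show ?thesis unfolding T_def .
qed


lemma rinner_cong_both: "(\<And>i. i < n \<Longrightarrow> x i = x' i) \<Longrightarrow> (\<And>i. i < n \<Longrightarrow> y i = y' i) \<Longrightarrow> rinner n x y = rinner n x' y'"
  by (simp add: rinner_def)

lemma pure_from:
  assumes n3: "3 \<le> n" and xx: "rinner n x x = 1" and yy: "rinner n y y = 1" and xy: "rinner n x y = 0"
  shows "\<exists>u. u \<in> Vm m \<and> Nsp m u = 1 \<and> (\<forall>i<n. Xsp m E u i = x i) \<and> (\<forall>i<n. Ysp m E u i = y i)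
     \<and> rnorm n (Xsp m E u) = 1 \<and> rnorm n (Ysp m E u) = 1 \<and> vop x (de0 u) = u \<and> dscale \<i> (vop y u) = u"
proof -
  obtain z where z: "rinner n z z = 1" "rinner n z x = 0" "rinner n z y = 0" using third_vec[OF n3 xx yy xy] by blast
  obtain u where u: "u \<in> Vm m" "Nsp m u = 1" "vop x (de0 u) = u" "dscale \<i> (vop y u) = u"
    using pure_exists[OF xx yy z(1) xy z(2,3)] by blast
  show ?thesis using u pure_props[OF u xx yy] by blast
qed

lemma finish:
  assumes u: "u \<in> Vm m" "Nsp m u = 1" "rnorm n (Xsp m E u) = 1" "rnorm n (Ysp m E u) = 1"
    and Fu: "Ffun n m E C P A u = - L"
    and low: "\<And>v. v \<in> Vm m \<Longrightarrow> - L * Nsp m v \<le> Ffun n m E C P A v"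
  shows "\<exists>u. spnorm m u = 1
            \<and> (\<forall>v. spnorm m v = 1 \<longrightarrow> Ffun n m E C P A u \<le> Ffun n m E C P A v)
            \<and> Nsp m u = 1 \<and> rnorm n (Xsp m E u) = 1 \<and> rnorm n (Ysp m E u) = 1"
proof (intro exI conjI allI impI)
  show "spnorm m u = 1" using u by (simp add: spnorm_def)
  fix v assume "spnorm m v = 1"
  then have Nv: "Nsp m v = 1"
    using dinner_self_nonneg[of m v] by (simp add: spnorm_def Nsp_def)
  have "- L * Nsp m (Tsp m v) \<le> Ffun n m E C P A (Tsp m v)" by (rule low[OF Tsp_in_Vm])
  then show "Ffun n m E C P A u \<le> Ffun n m E C P A v" using Nv Fu by (simp add: Nsp_Tsp Ffun_Tsp)
qed (use u in auto)

lemma case1_main: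
  assumes n3: "3 \<le> n" and A0: "\<forall>i<n. \<forall>j<n. A i j = 0"
  shows "\<exists>u. spnorm m u = 1
            \<and> (\<forall>v. spnorm m v = 1 \<longrightarrow> Ffun n m E C P A u \<le> Ffun n m E C P A v)
            \<and> Nsp m u = 1 \<and> rnorm n (Xsp m E u) = 1 \<and> rnorm n (Ysp m E u) = 1"
proof -
  have pz: "pair2 n A w = 0" for w
    unfolding pair2_def using A0 by (intro sum.neutral ballI) auto
  have Flink: "Ffun n m E C P A v = Re (dinner m (vop C (de0 v)) v) + Re (dinner m (dscale \<i> (vop P v)) v)" for v
    by (simp add: F_link pz)
  obtain g1 g2 c1 c2 p1 p2 where g: "rinner n g1 g1 = 1" "rinner n g2 g2 = 1" "rinner n g1 g2 = 0"
    and Cg: "\<forall>i<n. C i = c1 * g1 i + c2 * g2 i" and Pg: "\<forall>i<n. P i = p1 * g1 i + p2 * g2 i"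
  proof -
    have n2: "2 \<le> n" using n3 by simp
    show ?thesis using frame2[OF n2, of C P] that by blast
  qed
  have CC: "rinner n C C = c1\<^sup>2 + c2\<^sup>2"
  proof -
    have "rinner n C C = rinner n (\<lambda>i. c1 * g1 i + c2 * g2 i) (\<lambda>i. c1 * g1 i + c2 * g2 i)"
      by (rule rinner_cong_both) (simp_all add: Cg)
    then show ?thesis by (simp add: rinner_pair[OF g] power2_eq_square)
  qed
  have PP: "rinner n P P = p1\<^sup>2 + p2\<^sup>2"
  proof -
    have "rinner n P P = rinner n (\<lambda>i. p1 * g1 i + p2 * g2 i) (\<lambda>i. p1 * g1 i + p2 * g2 i)"
      by (rule rinner_cong_both) (simp_all add: Pg)
    then show ?thesis by (simp add: rinner_pair[OF g] power2_eq_square)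
  qed
  have PC: "rinner n P C = p1 * c1 + p2 * c2"
  proof -
    have "rinner n P C = rinner n (\<lambda>i. p1 * g1 i + p2 * g2 i) (\<lambda>i. c1 * g1 i + c2 * g2 i)"
      by (rule rinner_cong_both) (simp_all add: Pg Cg)
    then show ?thesis by (simp add: rinner_pair[OF g])
  qed
  define D where "D = \<bar>c1 * p2 - c2 * p1\<bar>"
  have D0: "0 \<le> D" by (simp add: D_def)
  have DD: "D\<^sup>2 = rinner n C C * rinner n P P - (rinner n P C)\<^sup>2"
    unfolding CC PP PC D_def by (simp add: power2_eq_square algebra_simps)
  define L where "L = sqrt (rinner n C C + rinner n P P + 2 * D)"
  have low: "- L * Nsp m v \<le> Ffun n m E C P A v" if "v \<in> Vm m" for v
    using case1_lower[OF that D0 DD] by (simp add: Flink L_def Nsp_def)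
  define eps :: real where "eps = (if 0 \<le> c1 * p2 - c2 * p1 then 1 else -1)"
  have epsD: "eps * (c1 * p2 - c2 * p1) = D" by (simp add: eps_def D_def)
  have eps2: "eps * eps = 1" by (simp add: eps_def)
  have eps3: "eps * (eps * z) = z" for z by (simp add: eps_def)
  define al where "al = c1 + eps * p2"
  define be where "be = c2 - eps * p1"
  have LL: "L\<^sup>2 = al\<^sup>2 + be\<^sup>2"
  proof -
    have "L\<^sup>2 = rinner n C C + rinner n P P + 2 * D"
      unfolding L_def using rinner_self_nonneg[of n C] rinner_self_nonneg[of n P] D0 by simp
    also have "\<dots> = al\<^sup>2 + be\<^sup>2"
      unfolding CC PP epsD[symmetric] al_def be_def
      by (simp add: power2_eq_square algebra_simps eps3)
    finally show ?thesis .
  qed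
  have L0: "0 \<le> L" unfolding L_def using rinner_self_nonneg[of n C] rinner_self_nonneg[of n P] D0 by simp
  obtain x y where xy: "rinner n x x = 1" "rinner n y y = 1" "rinner n x y = 0"
    and val: "rinner n C x + rinner n P y = - L"
  proof (cases "L = 0")
    case True
    then have "al\<^sup>2 + be\<^sup>2 = 0" using LL by simp
    have "rinner n C C + rinner n P P + 2 * D = 0"
      using True unfolding L_def using rinner_self_nonneg[of n C] rinner_self_nonneg[of n P] D0 by simp
    then have "rinner n C C = 0" "rinner n P P = 0"
      using rinner_self_nonneg[of n C] rinner_self_nonneg[of n P] D0 by linarith+
    then have "\<forall>i<n. C i = 0" "\<forall>i<n. P i = 0" by (simp_all add: zero_vec)
    then have "rinner n C g1 + rinner n P g2 = - L" using True by (simp add: rinner_def)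
    then show ?thesis using that g by blast
  next
    case False
    then have Lp: "L > 0" using L0 by simp
    define x where "x = (\<lambda>i. (- al / L) * g1 i + (- be / L) * g2 i)"
    define y where "y = (\<lambda>i. (eps * be / L) * g1 i + (- eps * al / L) * g2 i)"
    have Lnz: "L \<noteq> 0" using Lp by simp
    have LL': "L * L = al * al + be * be" using LL by (simp add: power2_eq_square)
    have xx: "rinner n x x = 1"
    proof -
      have "rinner n x x = (al * al + be * be) / (L * L)"
        unfolding x_def rinner_pair[OF g] using Lnz by (simp add: field_simps)
      moreover have "al * al + be * be \<noteq> 0" using LL' Lnz by (metis mult_eq_0_iff)
      ultimately show ?thesis using LL' by simp
    qed
    have yy: "rinner n y y = 1"
    proof -
      have "rinner n y y = (al * al + be * be) / (L * L)"
        unfolding y_def rinner_pair[OF g] using Lnz eps2 by (simp add: field_simps)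
      moreover have "al * al + be * be \<noteq> 0" using LL' Lnz by (metis mult_eq_0_iff)
      ultimately show ?thesis using LL' by simp
    qed
    have xy0: "rinner n x y = 0"
      unfolding x_def y_def rinner_pair[OF g] by (simp add: field_simps)
    have Cx: "rinner n C x = c1 * (- al / L) + c2 * (- be / L)"
    proof -
      have "rinner n C x = rinner n (\<lambda>i. c1 * g1 i + c2 * g2 i) x"
        by (rule rinner_cong_both) (simp_all add: Cg)
      then show ?thesis unfolding x_def rinner_pair[OF g] .
    qed
    have Py: "rinner n P y = p1 * (eps * be / L) + p2 * (- eps * al / L)"
    proof -
      have "rinner n P y = rinner n (\<lambda>i. p1 * g1 i + p2 * g2 i) y"
        by (rule rinner_cong_both) (simp_all add: Pg)
      then show ?thesis unfolding y_def rinner_pair[OF g] .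
    qed
    have "rinner n C x + rinner n P y = - (al * (c1 + eps * p2) + be * (c2 - eps * p1)) / L"
      unfolding Cx Py using Lp by (simp add: field_simps)
    also have "\<dots> = - (al\<^sup>2 + be\<^sup>2) / L" by (simp add: al_def be_def power2_eq_square)
    also have "\<dots> = - (L * L) / L" using LL' by (simp add: power2_eq_square)
    also have "\<dots> = - L" using Lnz by simp
    finally show ?thesis using that xx yy xy0 by blast
  qed
  obtain u where u: "u \<in> Vm m" "Nsp m u = 1" "\<forall>i<n. Xsp m E u i = x i" "\<forall>i<n. Ysp m E u i = y i"
     "rnorm n (Xsp m E u) = 1" "rnorm n (Ysp m E u) = 1"
    using pure_from[OF n3 xy] by blast
  have "Ffun n m E C P A u = rinner n C x + rinner n P y"
    unfolding Ffun_def pz using u(3,4) by (simp add: rinner_def)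
  then have "Ffun n m E C P A u = - L" using val by simp
  then show ?thesis by (rule finish[OF u(1,2,5,6) _ low])
qed

end



lemma rinner_P_comb: "rinner n P (\<lambda>i. a * e1 i + b * e2 i) = a * rinner n P e1 + b * rinner n P e2"
  by (rule rinner_lin2)

lemma cs_choice:
  fixes p1 p2 sg :: real
  assumes sg: "sg * sg = 1"
  defines "r \<equiv> sqrt (p1\<^sup>2 + p2\<^sup>2)"
  obtains c s where "c\<^sup>2 + s\<^sup>2 = 1" "- s * p1 + c * p2 = 0" "c * p1 + s * p2 = sg * r"
proof (cases "r = 0")
  case True
  then have "p1\<^sup>2 + p2\<^sup>2 = 0" unfolding r_def by simp
  then have "p1 = 0" "p2 = 0" by (auto simp: add_nonneg_eq_0_iff)
  then show ?thesis using that[of 1 0] True by simp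
next
  case False
  have "0 \<le> r" unfolding r_def by simp
  then have rp: "r > 0" using False by linarith
  have rr: "r * r = p1\<^sup>2 + p2\<^sup>2" unfolding r_def by (simp add: add_nonneg_nonneg)
  define c where "c = sg * p1 / r"
  define s where "s = sg * p2 / r"
  have "c\<^sup>2 + s\<^sup>2 = sg * sg * (p1\<^sup>2 + p2\<^sup>2) / (r * r)"
    unfolding c_def s_def by (simp add: power2_eq_square add_divide_distrib algebra_simps)
  also have "\<dots> = 1" using sg rp by (simp add: rr[symmetric])
  finally have 1: "c\<^sup>2 + s\<^sup>2 = 1" .
  have 2: "- s * p1 + c * p2 = 0" unfolding c_def s_def by (simp add: field_simps)
  have "c * p1 + s * p2 = sg * (p1\<^sup>2 + p2\<^sup>2) / r" unfolding c_def s_def by (simp add: power2_eq_square add_divide_distrib algebra_simps)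
  also have "\<dots> = sg * (r * r) / r" by (simp add: rr)
  also have "\<dots> = sg * r" using rp by simp
  finally show ?thesis using that 1 2 by blast
qed

context spin
begin

lemma vop_de0_alt: "vop x (de0 w) = - de0 (vop x w)"
  unfolding vop_def by (rule mop_de0)

lemma case2_main:
  assumes n3: "3 \<le> n" and sA: "simple_two_form n A" and C0: "\<forall>i<n. C i = 0"
  shows "\<exists>u. spnorm m u = 1
            \<and> (\<forall>v. spnorm m v = 1 \<longrightarrow> Ffun n m E C P A u \<le> Ffun n m E C P A v)
            \<and> Nsp m u = 1 \<and> rnorm n (Xsp m E u) = 1 \<and> rnorm n (Ysp m E u) = 1"
proof -
  obtain a e1 e2 where e: "rinner n e1 e1 = 1" "rinner n e2 e2 = 1" "rinner n e1 e2 = 0"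
    and Ae: "\<forall>i<n. \<forall>j<n. A i j = a * (e1 i * e2 j - e1 j * e2 i)"
    using sA unfolding simple_two_form_def by blast
  have CX: "rinner n C z = 0" for z using C0 by (simp add: rinner_def)
  have Flink: "Ffun n m E C P A v = Re (dinner m (dscale \<i> (vop P v)) v) + a * Im (dinner m (vop e1 (vop e2 (de0 v))) v)" for v
    by (simp add: Ffun_def CX Y_link pair2_link[OF Ae e(3)])
  define p1 where "p1 = rinner n P e1"
  define p2 where "p2 = rinner n P e2"
  define r where "r = sqrt (p1\<^sup>2 + p2\<^sup>2)"
  have r0: "0 \<le> r" by (simp add: r_def)
  define L where "L = sqrt (rinner n P P + a\<^sup>2 + 2 * \<bar>a\<bar> * r)"
  have low: "- L * Nsp m v \<le> Ffun n m E C P A v" if "v \<in> Vm m" for v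
    using case2_lower[OF that e, of P a] by (simp add: Flink L_def r_def p1_def p2_def Nsp_def)
  define sg :: real where "sg = (if 0 \<le> a then 1 else -1)"
  have sg2: "(- sg) * (- sg) = 1" by (simp add: sg_def)
  have sga: "sg * a = \<bar>a\<bar>" by (simp add: sg_def)
  obtain c s where cs: "c\<^sup>2 + s\<^sup>2 = 1" "- s * p1 + c * p2 = 0" "c * p1 + s * p2 = (- sg) * r"
    using cs_choice[OF sg2, of p1 p2] unfolding r_def by blast
  define x' where "x' = (\<lambda>i. c * e1 i + s * e2 i)"
  define x where "x = (\<lambda>i. (- s) * e1 i + c * e2 i)"
  have x'x': "rinner n x' x' = 1" unfolding x'_def rinner_pair[OF e] using cs(1) by (simp add: power2_eq_square)
  have xx: "rinner n x x = 1" unfolding x_def rinner_pair[OF e] using cs(1) by (simp add: power2_eq_square)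
  have x'x: "rinner n x' x = 0" unfolding x'_def x_def rinner_pair[OF e] by simp
  have xx': "rinner n x x' = 0" using x'x rinner_comm[of n x x'] by simp
  have Px: "rinner n P x = 0" unfolding x_def rinner_P_comb p1_def[symmetric] p2_def[symmetric] using cs(2) by simp
  have Px': "rinner n P x' = - sg * r" unfolding x'_def rinner_P_comb p1_def[symmetric] p2_def[symmetric] using cs(3) by simp
  define q where "q = (\<lambda>i. P i - a * x' i)"
  have qq: "rinner n q q = L\<^sup>2"
  proof -
    have q1: "rinner n q w = rinner n P w - a * rinner n x' w" for w unfolding q_def by (rule rinner_comb2)
    have "rinner n q q = rinner n P q - a * rinner n x' q" by (rule q1)
    also have "rinner n P q = rinner n P P - a * rinner n x' P"
      using q1[of P] rinner_comm[of n P q] by simp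
    also have "rinner n x' q = rinner n P x' - a * rinner n x' x'"
      using q1[of x'] rinner_comm[of n x' q] by simp
    also have "rinner n x' P = rinner n P x'" by (rule rinner_comm)
    finally have "rinner n q q = rinner n P P - a * rinner n P x' - a * (rinner n P x' - a * rinner n x' x')" .
    also have "\<dots> = rinner n P P + a\<^sup>2 + 2 * \<bar>a\<bar> * r" using Px' x'x' sga[symmetric] by (simp add: power2_eq_square algebra_simps)
    finally show ?thesis unfolding L_def using rinner_self_nonneg[of n P] r0 by simp
  qed
  have L0: "0 \<le> L" unfolding L_def using rinner_self_nonneg[of n P] r0 by simp
  have qx: "rinner n q x = 0" unfolding q_def rinner_comb2 using Px x'x by simp
  obtain y where yy: "rinner n y y = 1" and xy: "rinner n x y = 0" and val: "rinner n q y = - L"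
  proof (cases "L = 0")
    case True
    then have "rinner n q q = 0" using qq by simp
    then have "\<forall>i<n. q i = 0" by (rule zero_vec)
    then have "rinner n q x' = 0" by (simp add: rinner_def)
    then show ?thesis using that[of x'] x'x' xx' True by simp
  next
    case False
    then have Lp: "L > 0" using L0 by simp
    define y where "y = (\<lambda>i. (- 1 / L) * q i)"
    have "rinner n y y = rinner n q q / (L * L)" unfolding y_def rinner_scale1 rinner_scale2 by simp
    then have 1: "rinner n y y = 1" using qq Lp by (simp add: power2_eq_square)
    have 2: "rinner n x y = 0" unfolding y_def rinner_scale2 using qx rinner_comm[of n x q] by simp
    have "rinner n q y = - rinner n q q / L" unfolding y_def rinner_scale2 by simp
    then have 3: "rinner n q y = - L" using qq Lp by (simp add: power2_eq_square)
    show ?thesis using that 1 2 3 by blast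
  qed
  obtain u where u: "u \<in> Vm m" "Nsp m u = 1" "\<forall>i<n. Xsp m E u i = x i" "\<forall>i<n. Ysp m E u i = y i"
     "rnorm n (Xsp m E u) = 1" "rnorm n (Ysp m E u) = 1" "vop x (de0 u) = u" "dscale \<i> (vop y u) = u"
    using pure_from[OF n3 xx yy xy] by blast
  have Yu: "rinner n z (Ysp m E u) = rinner n z y" for z
    using u(4) by (simp add: rinner_def)
  have "vop e1 (vop e2 (de0 u)) = vop x' (vop x (de0 u))"
    unfolding x'_def x_def by (rule rot_id[OF de0_Vm[OF u(1)] e cs(1), symmetric])
  then have A1: "vop e1 (vop e2 (de0 u)) = vop x' u" using u(7) by simp
  have "rinner n x' y = Re (dinner m (dscale \<i> (vop x' u)) u)" using Y_link[of x' u] Yu by simp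
  then have Im1: "Im (dinner m (vop x' u) u) = - rinner n x' y" by (simp add: dinner_scale1)
  have "Ffun n m E C P A u = rinner n P y - a * rinner n x' y"
    unfolding Flink A1 Im1 using Y_link[of P u] Yu by simp
  also have "\<dots> = rinner n q y" unfolding q_def rinner_comb2 by simp
  finally have "Ffun n m E C P A u = - L" using val by simp
  then show ?thesis by (rule finish[OF u(1,2,5,6) _ low])
qed


lemma case3_main:
  assumes n3: "3 \<le> n" and sA: "simple_two_form n A" and P0: "\<forall>i<n. P i = 0"
  shows "\<exists>u. spnorm m u = 1
            \<and> (\<forall>v. spnorm m v = 1 \<longrightarrow> Ffun n m E C P A u \<le> Ffun n m E C P A v)
            \<and> Nsp m u = 1 \<and> rnorm n (Xsp m E u) = 1 \<and> rnorm n (Ysp m E u) = 1"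
proof -
  obtain a e1 e2 where e: "rinner n e1 e1 = 1" "rinner n e2 e2 = 1" "rinner n e1 e2 = 0"
    and Ae: "\<forall>i<n. \<forall>j<n. A i j = a * (e1 i * e2 j - e1 j * e2 i)"
    using sA unfolding simple_two_form_def by blast
  have PY: "rinner n P z = 0" for z using P0 by (simp add: rinner_def)
  have Flink: "Ffun n m E C P A v = Re (dinner m (vop C (de0 v)) v) + a * Im (dinner m (vop e1 (vop e2 (de0 v))) v)" for v
    by (simp add: Ffun_def PY X_link pair2_link[OF Ae e(3)])
  define p1 where "p1 = rinner n C e1"
  define p2 where "p2 = rinner n C e2"
  define r where "r = sqrt (p1\<^sup>2 + p2\<^sup>2)"
  have r0: "0 \<le> r" by (simp add: r_def)
  define L where "L = sqrt (rinner n C C + a\<^sup>2 + 2 * \<bar>a\<bar> * r)"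
  have low: "- L * Nsp m v \<le> Ffun n m E C P A v" if "v \<in> Vm m" for v
    using case3_lower[OF that e, of C a] by (simp add: Flink L_def r_def p1_def p2_def Nsp_def)
  define sg :: real where "sg = (if 0 \<le> a then 1 else -1)"
  have sg2: "sg * sg = 1" by (simp add: sg_def)
  have sga: "sg * a = \<bar>a\<bar>" by (simp add: sg_def)
  obtain c s where cs: "c\<^sup>2 + s\<^sup>2 = 1" "- s * p1 + c * p2 = 0" "c * p1 + s * p2 = sg * r"
    using cs_choice[OF sg2, of p1 p2] unfolding r_def by blast
  define y' where "y' = (\<lambda>i. c * e1 i + s * e2 i)"
  define y where "y = (\<lambda>i. (- s) * e1 i + c * e2 i)"
  have y'y': "rinner n y' y' = 1" unfolding y'_def rinner_pair[OF e] using cs(1) by (simp add: power2_eq_square)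
  have yy: "rinner n y y = 1" unfolding y_def rinner_pair[OF e] using cs(1) by (simp add: power2_eq_square)
  have y'y: "rinner n y' y = 0" unfolding y'_def y_def rinner_pair[OF e] by simp
  have Cy: "rinner n C y = 0" unfolding y_def rinner_P_comb p1_def[symmetric] p2_def[symmetric] using cs(2) by simp
  have Cy': "rinner n C y' = sg * r" unfolding y'_def rinner_P_comb p1_def[symmetric] p2_def[symmetric] using cs(3) by simp
  define q where "q = (\<lambda>i. C i - (- a) * y' i)"
  have q1: "rinner n q w = rinner n C w + a * rinner n y' w" for w unfolding q_def rinner_comb2 by simp
  have qq: "rinner n q q = L\<^sup>2"
  proof -
    have "rinner n q q = rinner n C q + a * rinner n y' q" by (rule q1)
    also have "rinner n C q = rinner n C C + a * rinner n y' C"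
      using q1[of C] rinner_comm[of n C q] by simp
    also have "rinner n y' q = rinner n C y' + a * rinner n y' y'"
      using q1[of y'] rinner_comm[of n y' q] by simp
    also have "rinner n y' C = rinner n C y'" by (rule rinner_comm)
    finally have "rinner n q q = rinner n C C + a * rinner n C y' + a * (rinner n C y' + a * rinner n y' y')" .
    also have "\<dots> = rinner n C C + a\<^sup>2 + 2 * \<bar>a\<bar> * r" using Cy' y'y' sga[symmetric] by (simp add: power2_eq_square algebra_simps)
    finally show ?thesis unfolding L_def using rinner_self_nonneg[of n C] r0 by simp
  qed
  have L0: "0 \<le> L" unfolding L_def using rinner_self_nonneg[of n C] r0 by simp
  have qy: "rinner n q y = 0" using q1[of y] Cy y'y by simp
  have yy': "rinner n y y' = 0" using y'y rinner_comm[of n y y'] by simp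
  obtain x where xx: "rinner n x x = 1" and xy: "rinner n x y = 0" and val: "rinner n q x = - L"
  proof (cases "L = 0")
    case True
    then have "rinner n q q = 0" using qq by simp
    then have "\<forall>i<n. q i = 0" by (rule zero_vec)
    then have "rinner n q y' = 0" by (simp add: rinner_def)
    then show ?thesis using that[of y'] y'y' y'y True by simp
  next
    case False
    then have Lp: "L > 0" using L0 by simp
    define x where "x = (\<lambda>i. (- 1 / L) * q i)"
    have "rinner n x x = rinner n q q / (L * L)" unfolding x_def rinner_scale1 rinner_scale2 by simp
    then have 1: "rinner n x x = 1" using qq Lp by (simp add: power2_eq_square)
    have 2: "rinner n x y = 0" unfolding x_def rinner_scale1 using qy by simp
    have "rinner n q x = - rinner n q q / L" unfolding x_def rinner_scale2 by simp
    then have 3: "rinner n q x = - L" using qq Lp by (simp add: power2_eq_square)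
    show ?thesis using that 1 2 3 by blast
  qed
  obtain u where u: "u \<in> Vm m" "Nsp m u = 1" "\<forall>i<n. Xsp m E u i = x i" "\<forall>i<n. Ysp m E u i = y i"
     "rnorm n (Xsp m E u) = 1" "rnorm n (Ysp m E u) = 1" "vop x (de0 u) = u" "dscale \<i> (vop y u) = u"
    using pure_from[OF n3 xx yy xy] by blast
  have Xu: "rinner n z (Xsp m E u) = rinner n z x" for z
    using u(3) by (simp add: rinner_def)
  have vy: "vop y u = dscale (- \<i>) u"
  proof -
    have "dscale (- \<i>) (dscale \<i> (vop y u)) = dscale (- \<i>) u" using u(8) by simp
    then show ?thesis by simp
  qed
  have "vop e1 (vop e2 (de0 u)) = vop y' (vop y (de0 u))"
    unfolding y'_def y_def by (rule rot_id[OF de0_Vm[OF u(1)] e cs(1), symmetric])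
  also have "vop y (de0 u) = dscale \<i> (de0 u)"
    by (simp add: vop_de0_alt vy de0_scale dscale_minus_left de0_uminus)
  finally have A1: "vop e1 (vop e2 (de0 u)) = dscale \<i> (vop y' (de0 u))" by (simp add: vop_scale)
  have "rinner n y' x = Re (dinner m (vop y' (de0 u)) u)" using X_link[of y' u] Xu by simp
  then have Im1: "Im (dinner m (dscale \<i> (vop y' (de0 u))) u) = rinner n y' x" by (simp add: dinner_scale1)
  have "Ffun n m E C P A u = rinner n C x + a * rinner n y' x"
    unfolding Flink A1 Im1 using X_link[of C u] Xu by simp
  also have "\<dots> = rinner n q x" by (simp add: q1)
  finally have "Ffun n m E C P A u = - L" using val by simp
  then show ?thesis by (rule finish[OF u(1,2,5,6) _ low])
qed

end

theorem mainTheorem12: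
  fixes n m :: nat and E :: "nat \<Rightarrow> cmat" and C P :: "nat \<Rightarrow> real"
    and A :: "nat \<Rightarrow> nat \<Rightarrow> real"
  assumes "n \<ge> 3" and "is_spinor_module n m E" and "is_two_form n A"
    and "(\<forall>i<n. \<forall>j<n. A i j = 0)
         \<or> (simple_two_form n A \<and> (\<forall>i<n. C i = 0))
         \<or> (simple_two_form n A \<and> (\<forall>i<n. P i = 0))"
  shows "\<exists>u. spnorm m u = 1
            \<and> (\<forall>v. spnorm m v = 1 \<longrightarrow> Ffun n m E C P A u \<le> Ffun n m E C P A v)
            \<and> Nsp m u = 1 \<and> rnorm n (Xsp m E u) = 1 \<and> rnorm n (Ysp m E u) = 1"
proof -
  interpret spin n m E by (rule spin.intro) (rule assms(2))
  show ?thesis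
    using assms(4) case1_main[OF assms(1)] case2_main[OF assms(1)] case3_main[OF assms(1)] by blast
qed

end
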